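(* Assume (A2) and (B2) (see context). Let $\varphi\in\mathcal{D}([0,\infty)\times\mathbb{R}^d)$ and, for $\varepsilon>0$, let $$\chi^\varepsilon(t,x,v):=\int_0^\infty\lceil v\rfloor^{-\beta}\tilde\nu_\varepsilon(x,v,z)\,e^{-\int_0^z\lceil v\rfloor^{-\beta}\tilde\nu_\varepsilon(x,v,s)\,\mathrm{d}s}\,\varphi(t,x+\varepsilon\lceil v\rfloor^{-\beta}vz)\,\mathrm{d}z,$$ where $\tilde\nu_\varepsilon(x,v,z):=\nu(x+\varepsilon\lceil v\rfloor^{-\beta}vz,v)$ (i.e. $\chi^\varepsilon$ solves $\lceil v\rfloor^{-\beta}\nu\chi^\varepsilon-\varepsilon\lceil v\rfloor^{-\beta}v\cdot\nabla_x\chi^\varepsilon=\lceil v\rfloor^{-\beta}\nu\varphi$). Then $$\int_0^\infty\!\!\int_{\mathbb{R}^{2d}}F(v)[\chi^\varepsilon-\varphi]^2\,\mathrm{d}x\,\mathrm{d}v\,\mathrm{d}t\to0,\qquad\int_0^\infty\!\!\int_{\mathbb{R}^{2d}}F(v)[\partial_t\chi^\varepsilon-\partial_t\varphi]^2\,\mathrm{d}x\,\mathrm{d}v\,\mathrm{d}t\to0$$ as $\varepsilon\to0$, and there is $C>0$ (independent of $\varepsilon$) with $$\|\chi^\varepsilon\|_{L^2_F((0,\infty)\times\mathbb{R}^{2d})}\le C\|\varphi\|_{L^2((0,\infty)\times\mathbb{R}^d)},\qquad\|\partial_t\chi^\varepsilon\|_{L^2_F((0,\infty)\times\mathbb{R}^{2d})}\le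 C\|\partial_t\varphi\|_{L^2((0,\infty)\times\mathbb{R}^d)}.$$
   Context: Let $d\ge1$, $\sigma(x,v,v')\ge0$, $\nu(x,v):=\int\sigma(x,v',v)\,\mathrm{d}v'$, $Q(f):=\int[\sigma(x,v,v')f(v')-\sigma(x,v',v)f(v)]\,\mathrm{d}v'$, $\langle v\rangle=(1+|v|^2)^{1/2}$. $L^2_F$ denotes $L^2$ with measure $F\,\mathrm{d}t\,\mathrm{d}x\,\mathrm{d}v$. $\lceil v\rfloor^{-\beta}:=1$ for $|v|\le1$ and $:=|v|^{-\beta}$ for $|v|\ge1$. (A2) There is $F\in L^1_\nu(\mathbb{R}^d)$ independent of $x$ with $Q(F)=0$, $F>0$, $\int F\,\mathrm{d}v=1$. (B2) There are $\nu_1,\nu_2>0$, a function $\nu_0(x)$ and $\beta\in\mathbb{R}$ with $\nu_1\langle v\rangle^\beta\le\nu(x,v)\le\nu_2\langle v\rangle^\beta$ for all $x,v$, $|v|^{-\beta}\nu(x,v)\to\nu_0(x)$ as $|v|\to\infty$ uniformly in $x$, $\nu$ is $C^1$ in $x$ and $\|\langle v\rangle^{-\beta}\partial_x\nu\|_{L^\infty(\mathbb{R}^{2d})}\le C$. (As used in the paper, (B2) implies $\nu_1\le\lceil v\rfloor^{-\beta}\nu(x,v)\le\nu_2$ up to constants.) *)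

theory Defs
  imports "HOL-Analysis.Analysis"
begin

definition jbr :: "'a::euclidean_space \<Rightarrow> real" where
  "jbr v = sqrt (1 + (norm v)^2)"

definition lcw :: "real \<Rightarrow> 'a::euclidean_space \<Rightarrow> real" where
  "lcw \<beta> v = (if norm v \<le> 1 then 1 else norm v powr (- \<beta>))"

definition nu :: "('a::euclidean_space \<Rightarrow> 'a \<Rightarrow> 'a \<Rightarrow> real) \<Rightarrow> 'a \<Rightarrow> 'a \<Rightarrow> real" where
  "nu \<sigma> x v = (\<integral>v'. \<sigma> x v' v \<partial>lborel)"

definition Qop :: "('a::euclidean_space \<Rightarrow> 'a \<Rightarrow> 'a \<Rightarrow> real) \<Rightarrow> ('a \<Rightarrow> real) \<Rightarrow> 'a \<Rightarrow> 'a \<Rightarrow> real" where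
  "Qop \<sigma> f x v = (\<integral>v'. (\<sigma> x v v' * f v' - \<sigma> x v' v * f v) \<partial>lborel)"

fun Ck :: "nat \<Rightarrow> ('a::euclidean_space \<Rightarrow> real) \<Rightarrow> bool" where
  "Ck 0 f = continuous_on UNIV f"
| "Ck (Suc k) f = ((\<forall>x. f differentiable (at x)) \<and>
      (\<forall>b\<in>Basis. Ck k (\<lambda>x. frechet_derivative f (at x) b)))"

definition smooth_fun :: "('a::euclidean_space \<Rightarrow> real) \<Rightarrow> bool" where
  "smooth_fun f = (\<forall>k. Ck k f)"

definition test_fun :: "('a::euclidean_space \<Rightarrow> real) \<Rightarrow> bool" where
  "test_fun f = (smooth_fun f \<and> compact (closure {p. f p \<noteq> 0}))"

definition chi :: "('a::euclidean_space \<Rightarrow> 'a \<Rightarrow> real) \<Rightarrow> real \<Rightarrow> (real \<times> 'a \<Rightarrow> real)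
                   \<Rightarrow> real \<Rightarrow> real \<Rightarrow> 'a \<Rightarrow> 'a \<Rightarrow> real" where
  "chi \<nu> \<beta> \<phi> \<epsilon> t x v =
     (let nut = (\<lambda>z. \<nu> (x + (\<epsilon> * lcw \<beta> v * z) *\<^sub>R v) v) in
      LINT z:{0..}|lborel.
        lcw \<beta> v * nut z * exp (- (LINT s:{0..z}|lborel. lcw \<beta> v * nut s))
        * \<phi> (t, x + (\<epsilon> * lcw \<beta> v * z) *\<^sub>R v))"

definition L2F_sq :: "('a::euclidean_space \<Rightarrow> real) \<Rightarrow> (real \<Rightarrow> 'a \<Rightarrow> 'a \<Rightarrow> real) \<Rightarrow> ennreal" where
  "L2F_sq F g = (\<integral>\<^sup>+ p. indicator {0<..} (fst p) *
       ennreal (F (snd (snd p)) * (g (fst p) (fst (snd p)) (snd (snd p)))^2) \<partial>(lborel :: (real \<times> 'a \<times> 'a) measure))"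

definition L2_sq :: "(real \<Rightarrow> 'a::euclidean_space \<Rightarrow> real) \<Rightarrow> ennreal" where
  "L2_sq g = (\<integral>\<^sup>+ p. indicator {0<..} (fst p) * ennreal ((g (fst p) (snd p))^2)
       \<partial>(lborel :: (real \<times> 'a) measure))"

end

theory Submission
  imports Defs
begin

lemma kernel_Q:
  fixes q :: "real \<Rightarrow> real"
  assumes cq: "continuous_on UNIV q" and lb: "\<And>s. b \<le> q s" and ub: "\<And>s. q s \<le> A" and b: "0 < b"
  shows "(LINT s:{0..z}|lborel. q s) = integral {0..z} q"
    and "0 \<le> z \<Longrightarrow> b * z \<le> integral {0..z} q"
    and "0 \<le> z \<Longrightarrow> integral {0..z} q \<le> A * z"
    and "0 \<le> z \<Longrightarrow> z \<le> n \<Longrightarrow> ((\<lambda>z. integral {0..z} q) has_real_derivative q z) (at z within {0..n})"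
    and "continuous_on {0..} (\<lambda>z. integral {0..z} q)"
proof -
  have cqS: "continuous_on S q" for S using cq continuous_on_subset by blast
  show "(LINT s:{0..z}|lborel. q s) = integral {0..z} q"
    by (rule set_borel_integral_eq_integral(2))
       (use borel_integrable_compact[OF compact_Icc cqS] in \<open>auto simp: set_integrable_def\<close>)
  assume z: "0 \<le> z"
  have "integral {0..z} (\<lambda>_. b) \<le> integral {0..z} q"
    by (intro integral_le integrable_continuous_real cqS) (auto simp: lb)
  then show "b * z \<le> integral {0..z} q" using z by (simp add: mult.commute)
  have "integral {0..z} q \<le> integral {0..z} (\<lambda>_. A)"
    by (intro integral_le integrable_continuous_real cqS) (auto simp: ub)
  then show "integral {0..z} q \<le> A * z" using z by (simp add: mult.commute)
next
  fix z n :: real assume "0 \<le> z" "z \<le> n"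
  then show "((\<lambda>z. integral {0..z} q) has_real_derivative q z) (at z within {0..n})"
    by (intro integral_has_real_derivative continuous_on_subset[OF cq]) auto
next
  show "continuous_on {0..} (\<lambda>z. integral {0..z} q)"
  proof (clarsimp simp: continuous_on_eq_continuous_within)
    fix z :: real assume z: "0 \<le> z"
    have "((\<lambda>z. integral {0..z} q) has_real_derivative q z) (at z within {0..z+1})"
      using z by (intro integral_has_real_derivative continuous_on_subset[OF cq]) auto
    then have c: "continuous (at z within {0..z+1}) (\<lambda>z. integral {0..z} q)"
      using DERIV_continuous by blast
    have "at z within {0..} = at z within {0..z+1}"
      by (rule at_within_nhd[of _ "{..<z+1}"]) auto
    then show "continuous (at z within {0..}) (\<lambda>z. integral {0..z} q)" using c by simp
  qed
qed

lemma exp_nn: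
  fixes b :: real assumes b: "0 < b"
  shows "(\<integral>\<^sup>+ z. ennreal (indicator {0..} z * exp (- b * z)) \<partial>lborel) = ennreal (1 / b)"
    and "set_integrable lborel {0..} (\<lambda>z. exp (- b * z))"
proof -
  have hi: "((\<lambda>z. indicator {0..} z * exp (- b * z)) has_integral (1 / b)) UNIV"
  proof -
    have "((\<lambda>x. exp (- b * x)) has_integral 1/b) {0..}"
      using has_integral_exp_minus_to_infinity[OF b, of 0] by simp
    then have "((\<lambda>x. if x \<in> {0..} then exp (- b * x) else 0) has_integral 1/b) UNIV"
      by (subst has_integral_restrict_UNIV)
    moreover have "(\<lambda>z. indicator {0..} z * exp (- b * z)) = (\<lambda>x. if x \<in> {0..} then exp (- b * x) else 0)"
      by (auto simp: indicator_def)
    ultimately show ?thesis by simp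
  qed
  have m: "(\<lambda>z. indicator {0..} z * exp (- b * z)) \<in> borel_measurable borel" by measurable
  show nn: "(\<integral>\<^sup>+ z. ennreal (indicator {0..} z * exp (- b * z)) \<partial>lborel) = ennreal (1 / b)"
    by (rule nn_integral_has_integral_lborel[OF m _ hi]) simp
  show "set_integrable lborel {0..} (\<lambda>z. exp (- b * z))"
    unfolding set_integrable_def
    by (rule integrableI_nonneg) (use m nn in auto)
qed

lemma kernel:
  fixes q :: "real \<Rightarrow> real"
  assumes cq: "continuous_on UNIV q" and lb: "\<And>s. b \<le> q s" and ub: "\<And>s. q s \<le> A" and b: "0 < b"
  defines "k \<equiv> \<lambda>z. q z * exp (- (LINT s:{0..z}|lborel. q s))"
  shows kernel_pos: "\<And>z. 0 \<le> k z"
    and kernel_ub: "\<And>z. 0 \<le> z \<Longrightarrow> k z \<le> A * exp (- b * z)"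
    and kernel_int: "set_integrable lborel {0..} k"
    and kernel_one: "(LINT z:{0..}|lborel. k z) = 1"
proof -
  define Q where "Q z = integral {0..z} q" for z
  have kQ: "k z = q z * exp (- Q z)" for z
    unfolding k_def Q_def using kernel_Q(1)[OF assms(1-4)] by simp
  have Qb: "0 \<le> z \<Longrightarrow> b * z \<le> Q z" for z unfolding Q_def using kernel_Q(2)[OF assms(1-4)] by blast
  have Qd: "0 \<le> z \<Longrightarrow> z \<le> n \<Longrightarrow> (Q has_real_derivative q z) (at z within {0..n})" for z n
    unfolding Q_def using kernel_Q(4)[OF assms(1-4)] by blast
  have Qc: "continuous_on {0..} Q"
    unfolding Q_def using kernel_Q(5)[OF assms(1-4)] by blast
  have A0: "0 \<le> A" using lb[of 0] ub[of 0] b by linarith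
  show kpos: "0 \<le> k z" for z using lb[of z] b unfolding kQ by simp
  show kub: "k z \<le> A * exp (- b * z)" if z: "0 \<le> z" for z
    unfolding kQ using ub[of z] lb[of z] b Qb[OF z] A0
    by (intro mult_mono) auto
  have kc: "continuous_on {0..} k"
    unfolding kQ[abs_def]
    by (intro continuous_intros continuous_on_subset[OF cq] Qc) auto
  have km: "(\<lambda>z. indicator {0..} z * k z) \<in> borel_measurable borel"
    using borel_measurable_continuous_on_indicator[OF _ kc] by simp
  have km': "(\<lambda>z. indicator {0..} z * k z) \<in> borel_measurable lborel" using km by simp
  have wi: "integrable lborel (\<lambda>z. indicator {0..} z * (A * exp (- b * z)))"
  proof -
    have "integrable lborel (\<lambda>z. A * (indicator {0..} z * exp (- b * z)))"
      using exp_nn(2)[OF b] unfolding set_integrable_def by (intro integrable_mult_right) simp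
    then show ?thesis by (simp add: ac_simps)
  qed
  show ki: "set_integrable lborel {0..} k"
    unfolding set_integrable_def
    by (rule Bochner_Integration.integrable_bound[OF wi])
       (use km kpos kub A0 in \<open>auto simp: indicator_def\<close>)
  have sn: "(LINT z|lborel. indicator {0..real n} z * k z) = 1 - exp (- Q (real n))" for n :: nat
  proof -
    have si: "set_integrable lborel {0..real n} k"
      unfolding set_integrable_def
      using borel_integrable_compact[OF compact_Icc continuous_on_subset[OF kc]] by auto
    have "(LINT z|lborel. indicator {0..real n} z * k z) = integral {0..real n} k"
      using set_borel_integral_eq_integral(2)[OF si] by (simp add: set_lebesgue_integral_def)
    also have "\<dots> = (- exp (- Q (real n))) - (- exp (- Q 0))"
    proof (rule integral_unique, rule fundamental_theorem_of_calculus)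
      fix x assume x: "x \<in> {0..real n}"
      have "((\<lambda>z. - exp (- Q z)) has_real_derivative (exp (- Q x) * q x)) (at x within {0..real n})"
        using x by (auto intro!: derivative_eq_intros Qd)
      then show "((\<lambda>z. - exp (- Q z)) has_vector_derivative k x) (at x within {0..real n})"
        by (simp add: has_real_derivative_iff_has_vector_derivative kQ mult.commute)
    qed simp
    finally show ?thesis by (simp add: Q_def)
  qed
  have lim1: "(\<lambda>n. 1 - exp (- Q (real n))) \<longlonglongrightarrow> 1"
  proof -
    have e: "(\<lambda>n. exp (- b) ^ n) \<longlonglongrightarrow> 0"
      using b by (intro LIMSEQ_power_zero) auto
    have "(\<lambda>n. exp (- Q (real n))) \<longlonglongrightarrow> 0"
    proof (rule tendsto_sandwich[OF _ _ tendsto_const e])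
      show "\<forall>\<^sub>F n in sequentially. 0 \<le> exp (- Q (real n))" by simp
      show "\<forall>\<^sub>F n in sequentially. exp (- Q (real n)) \<le> exp (- b) ^ n"
      proof (rule always_eventually, rule allI)
        fix n :: nat
        have "b * real n \<le> Q (real n)" using Qb[of "real n"] by simp
        then have "exp (- Q (real n)) \<le> exp (real n * (- b))" by (simp add: mult.commute)
        also have "\<dots> = exp (- b) ^ n" by (rule exp_of_nat_mult)
        finally show "exp (- Q (real n)) \<le> exp (- b) ^ n" .
      qed
    qed
    then show ?thesis using tendsto_diff[OF tendsto_const[of 1]] by fastforce
  qed
  have "(\<lambda>n. LINT z|lborel. indicator {0..real n} z * k z) \<longlonglongrightarrow> (LINT z|lborel. indicator {0..} z * k z)"
  proof (rule integral_dominated_convergence[OF km' _ wi])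
    show "(\<lambda>z. indicator {0..real n} z * k z) \<in> borel_measurable lborel" for n
    proof -
      have "(\<lambda>z. indicator {0..real n} z * (indicator {0..} z * k z)) \<in> borel_measurable borel"
        by (intro borel_measurable_times borel_measurable_indicator km) auto
      moreover have "(\<lambda>z. indicator {0..real n} z * (indicator {0..} z * k z)) = (\<lambda>z. indicator {0..real n} z * k z)"
        by (auto simp: indicator_def fun_eq_iff)
      ultimately show ?thesis by simp
    qed
    show "AE z in lborel. (\<lambda>n. indicator {0..real n} z * k z) \<longlonglongrightarrow> indicator {0..} z * k z"
    proof (rule AE_I2)
      fix z :: real
      show "(\<lambda>n. indicator {0..real n} z * k z) \<longlonglongrightarrow> indicator {0..} z * k z"
      proof (cases "0 \<le> z")
        case True
        obtain N :: nat where "z \<le> real N" using real_arch_simple by blast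
        then have "\<forall>\<^sub>F n in sequentially. indicator {0..real n} z * k z = indicator {0..} z * k z"
          using True by (auto simp: eventually_sequentially intro!: exI[of _ N])
        then show ?thesis by (rule tendsto_eventually)
      qed simp
    qed
    show "AE z in lborel. norm (indicator {0..real n} z * k z) \<le> indicator {0..} z * (A * exp (- b * z))" for n
      using kpos kub A0 by (intro AE_I2) (auto simp: indicator_def)
  qed
  then have "(\<lambda>n. 1 - exp (- Q (real n))) \<longlonglongrightarrow> (LINT z:{0..}|lborel. k z)"
    by (simp add: sn set_lebesgue_integral_def)
  then show "(LINT z:{0..}|lborel. k z) = 1"
    using lim1 LIMSEQ_unique by blast
qed

lemma jensen:
  fixes k h :: "real \<Rightarrow> real"
  assumes ki: "set_integrable lborel {0..} k" and k1: "(LINT z:{0..}|lborel. k z) = 1"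
    and kpos: "\<And>z. 0 \<le> k z" and kub: "\<And>z. 0 \<le> z \<Longrightarrow> k z \<le> A * exp (- b * z)"
    and A0: "0 \<le> A"
    and hm: "h \<in> borel_measurable borel" and hb: "\<And>z. \<bar>h z\<bar> \<le> M"
  shows "ennreal ((LINT z:{0..}|lborel. k z * h z)^2)
     \<le> ennreal A * (\<integral>\<^sup>+ z. ennreal (indicator {0..} z * (exp (- b * z) * (h z)^2)) \<partial>lborel)"
    and "(LINT z:{0..}|lborel. k z * (h z - c)) = (LINT z:{0..}|lborel. k z * h z) - c"
proof -
  have kI: "integrable lborel (\<lambda>z. indicator {0..} z * k z)"
    using ki by (simp add: set_integrable_def)
  have km: "(\<lambda>z. indicator {0..} z * k z) \<in> borel_measurable lborel"
    using kI by (rule borel_measurable_integrable)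
  have hm': "h \<in> borel_measurable lborel" using hm by simp
  have M0: "0 \<le> M" using hb[of 0] by linarith
  have i1: "integrable lborel (\<lambda>z. indicator {0..} z * k z * h z)"
  proof (rule Bochner_Integration.integrable_bound[OF integrable_mult_right[OF kI, of M]])
    show "(\<lambda>z. indicator {0..} z * k z * h z) \<in> borel_measurable lborel"
      using km hm' by (rule borel_measurable_times)
    show "AE z in lborel. norm (indicator {0..} z * k z * h z) \<le> norm (M * (indicator {0..} z * k z))"
    proof (intro AE_I2)
      fix z
      have "k z * \<bar>h z\<bar> \<le> k z * M" by (rule mult_left_mono[OF hb kpos])
      then show "norm (indicator {0..} z * k z * h z) \<le> norm (M * (indicator {0..} z * k z))"
        using kpos[of z] M0 by (auto simp: indicator_def abs_mult mult.commute)
    qed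
  qed
  have i2: "integrable lborel (\<lambda>z. indicator {0..} z * k z * (h z)^2)"
  proof (rule Bochner_Integration.integrable_bound[OF integrable_mult_right[OF kI, of "M^2"]])
    show "(\<lambda>z. indicator {0..} z * k z * (h z)^2) \<in> borel_measurable lborel"
      using km hm' by measurable
    show "AE z in lborel. norm (indicator {0..} z * k z * (h z)^2) \<le> norm (M^2 * (indicator {0..} z * k z))"
    proof (intro AE_I2)
      fix z
      have "(h z)^2 \<le> M^2" using power_mono[OF hb[of z] abs_ge_zero, of 2] by simp
      then show "norm (indicator {0..} z * k z * (h z)^2) \<le> norm (M^2 * (indicator {0..} z * k z))"
        using kpos[of z] by (auto simp: indicator_def abs_mult mult.commute intro!: mult_left_mono)
    qed
  qed
  define m where "m = (LINT z:{0..}|lborel. k z * h z)"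
  have m': "m = (LINT z|lborel. indicator {0..} z * k z * h z)"
    unfolding m_def set_lebesgue_integral_def by (simp add: mult.assoc)
  have k1': "(LINT z|lborel. indicator {0..} z * k z) = 1"
    using k1 unfolding set_lebesgue_integral_def by simp
  show "(LINT z:{0..}|lborel. k z * (h z - c)) = (LINT z:{0..}|lborel. k z * h z) - c"
  proof -
    have "(LINT z:{0..}|lborel. k z * (h z - c)) = (LINT z|lborel. indicator {0..} z * k z * h z - c * (indicator {0..} z * k z))"
      unfolding set_lebesgue_integral_def by (intro Bochner_Integration.integral_cong) (auto simp: algebra_simps)
    also have "\<dots> = m - c"
      using i1 kI by (simp add: m' k1')
    finally show ?thesis by (simp add: m_def)
  qed
  have "0 \<le> (LINT z|lborel. indicator {0..} z * k z * (h z - m)^2)"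
    using kpos by (intro integral_nonneg_AE AE_I2) (auto simp: indicator_def)
  also have "(LINT z|lborel. indicator {0..} z * k z * (h z - m)^2)
      = (LINT z|lborel. indicator {0..} z * k z * (h z)^2 - (2 * m) * (indicator {0..} z * k z * h z) + m^2 * (indicator {0..} z * k z))"
    by (intro Bochner_Integration.integral_cong) (auto simp: algebra_simps power2_eq_square)
  also have "\<dots> = (LINT z|lborel. indicator {0..} z * k z * (h z)^2) - m^2"
    using i1 i2 kI by (simp add: m'[symmetric] k1' power2_eq_square)
  finally have jm: "m^2 \<le> (LINT z|lborel. indicator {0..} z * k z * (h z)^2)" by simp
  have "ennreal (LINT z|lborel. indicator {0..} z * k z * (h z)^2)
      = (\<integral>\<^sup>+ z. ennreal (indicator {0..} z * k z * (h z)^2) \<partial>lborel)"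
    using i2 kpos by (intro nn_integral_eq_integral[symmetric] AE_I2) (auto simp: indicator_def)
  also have "\<dots> \<le> (\<integral>\<^sup>+ z. ennreal A * ennreal (indicator {0..} z * (exp (- b * z) * (h z)^2)) \<partial>lborel)"
  proof (intro nn_integral_mono)
    fix z
    show "ennreal (indicator {0..} z * k z * (h z)^2) \<le> ennreal A * ennreal (indicator {0..} z * (exp (- b * z) * (h z)^2))"
    proof (cases "0 \<le> z")
      case True
      have "k z * (h z)^2 \<le> A * (exp (- b * z) * (h z)^2)"
        using kub[OF True] by (simp add: mult.assoc[symmetric] mult_right_mono)
      then show ?thesis using True A0 by (simp add: ennreal_mult[symmetric] indicator_def)
    qed (simp add: indicator_def)
  qed
  also have "\<dots> = ennreal A * (\<integral>\<^sup>+ z. ennreal (indicator {0..} z * (exp (- b * z) * (h z)^2)) \<partial>lborel)"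
    using hm by (intro nn_integral_cmult) measurable
  finally show "ennreal ((LINT z:{0..}|lborel. k z * h z)^2)
     \<le> ennreal A * (\<integral>\<^sup>+ z. ennreal (indicator {0..} z * (exp (- b * z) * (h z)^2)) \<partial>lborel)"
    using jm by (simp add: m_def[symmetric] order_trans[OF ennreal_leI])
qed

lemma r_powr_bounds:
  fixes r \<beta> :: real assumes "1 \<le> r" "r \<le> 2"
  shows "2 powr (- \<bar>\<beta>\<bar> / 2) \<le> r powr (\<beta> / 2)" "r powr (\<beta> / 2) \<le> 2 powr (\<bar>\<beta>\<bar> / 2)"
proof -
  have "r powr (\<beta> / 2) \<le> r powr (\<bar>\<beta>\<bar> / 2)" using assms by (intro powr_mono) auto
  also have "\<dots> \<le> 2 powr (\<bar>\<beta>\<bar> / 2)" using assms by (intro powr_mono2) auto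
  finally show "r powr (\<beta> / 2) \<le> 2 powr (\<bar>\<beta>\<bar> / 2)" .
  have "2 powr (- \<bar>\<beta>\<bar> / 2) \<le> r powr (- \<bar>\<beta>\<bar> / 2)" using assms by (intro powr_mono2') auto
  also have "\<dots> \<le> r powr (\<beta> / 2)" using assms by (intro powr_mono) auto
  finally show "2 powr (- \<bar>\<beta>\<bar> / 2) \<le> r powr (\<beta> / 2)" .
qed

lemma lcw_pos: "0 < lcw \<beta> v"
  unfolding lcw_def by (cases "norm v \<le> 1") auto

lemma lcw_jbr:
  fixes v :: "'a::euclidean_space"
  shows "2 powr (- \<bar>\<beta>\<bar> / 2) \<le> lcw \<beta> v * jbr v powr \<beta>"
    and "lcw \<beta> v * jbr v powr \<beta> \<le> 2 powr (\<bar>\<beta>\<bar> / 2)"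
proof -
  have j: "jbr v powr \<beta> = (1 + (norm v)^2) powr (\<beta> / 2)"
    unfolding jbr_def by (simp add: powr_half_sqrt[symmetric] powr_powr add_pos_nonneg)
  have "\<exists>r. 1 \<le> r \<and> r \<le> 2 \<and> lcw \<beta> v * jbr v powr \<beta> = r powr (\<beta> / 2)"
  proof (cases "norm v \<le> 1")
    case True
    then have "(norm v)^2 \<le> 1" by (simp add: power_le_one)
    then show ?thesis using True by (intro exI[of _ "1 + (norm v)^2"]) (simp add: lcw_def j)
  next
    case False
    then have nv: "1 < norm v" by simp
    have p2: "((norm v)^2) powr (- (\<beta> / 2)) = norm v powr (- \<beta>)"
    proof -
      have "((norm v)^2) powr (- (\<beta> / 2)) = (norm v powr 2) powr (- (\<beta> / 2))"
        using powr_realpow[of "norm v" 2] nv by simp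
      also have "\<dots> = norm v powr (2 * (- (\<beta> / 2)))" by (rule powr_powr)
      also have "\<dots> = norm v powr (- \<beta>)" by simp
      finally show ?thesis .
    qed
    have "lcw \<beta> v * jbr v powr \<beta> = ((norm v)^2) powr (- (\<beta> / 2)) * (1 + (norm v)^2) powr (\<beta> / 2)"
      using False by (simp add: lcw_def j p2)
    also have "\<dots> = ((1 + (norm v)^2) / (norm v)^2) powr (\<beta> / 2)"
    proof -
      have "((1 + (norm v)^2) / (norm v)^2) powr (\<beta> / 2) = (1 + (norm v)^2) powr (\<beta> / 2) / ((norm v)^2) powr (\<beta> / 2)"
        by (rule powr_divide; simp)
      also have "\<dots> = ((norm v)^2) powr (- (\<beta> / 2)) * (1 + (norm v)^2) powr (\<beta> / 2)"
        unfolding powr_minus by (rule divide_inverse_commute)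
      finally show ?thesis by (rule sym)
    qed
    finally have e: "lcw \<beta> v * jbr v powr \<beta> = ((1 + (norm v)^2) / (norm v)^2) powr (\<beta> / 2)" .
    have "1 \<le> (norm v)^2" using nv by (simp add: one_le_power)
    moreover have s0: "0 < (norm v)^2" using nv by (metis norm_zero not_one_less_zero zero_less_power2)
    ultimately have "1 \<le> (1 + (norm v)^2) / (norm v)^2 \<and> (1 + (norm v)^2) / (norm v)^2 \<le> 2"
      by (simp add: le_divide_eq divide_le_eq)
    then show ?thesis using e by blast
  qed
  then obtain r where "1 \<le> r" "r \<le> 2" "lcw \<beta> v * jbr v powr \<beta> = r powr (\<beta> / 2)" by blast
  then show "2 powr (- \<bar>\<beta>\<bar> / 2) \<le> lcw \<beta> v * jbr v powr \<beta>"
    and "lcw \<beta> v * jbr v powr \<beta> \<le> 2 powr (\<bar>\<beta>\<bar> / 2)"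
    using r_powr_bounds by auto
qed

lemma kbnd:
  fixes k h :: "real \<Rightarrow> real"
  assumes ki: "set_integrable lborel {0..} k" and k1: "(LINT z:{0..}|lborel. k z) = 1"
    and kpos: "\<And>z. 0 \<le> k z"
    and hm: "h \<in> borel_measurable borel" and hb: "\<And>z. 0 \<le> z \<Longrightarrow> \<bar>h z\<bar> \<le> M"
  shows "set_integrable lborel {0..} (\<lambda>z. k z * h z)"
    and "\<bar>LINT z:{0..}|lborel. k z * h z\<bar> \<le> M"
proof -
  have km: "(\<lambda>z. indicator {0..} z * k z) \<in> borel_measurable lborel"
    using ki by (simp add: set_integrable_def borel_measurable_integrable)
  have M0: "0 \<le> M" using hb[of 0] by linarith
  have kM: "set_integrable lborel {0..} (\<lambda>z. k z * M)"
    using ki by (intro set_integrable_mult_left)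
  show kh: "set_integrable lborel {0..} (\<lambda>z. k z * h z)"
  proof (rule set_integrable_bound[OF kM])
    show "set_borel_measurable lborel {0..} (\<lambda>z. k z * h z)"
      unfolding set_borel_measurable_def using km hm
      by (simp add: mult.assoc[symmetric])
    show "AE x in lborel. x \<in> {0..} \<longrightarrow> norm (k x * h x) \<le> norm (k x * M)"
      using kpos hb M0 by (intro AE_I2) (auto simp: abs_mult intro!: mult_left_mono)
  qed
  have kmM: "set_integrable lborel {0..} (\<lambda>z. k z * (- M))"
    using ki by (intro set_integrable_mult_left)
  have "(LINT z:{0..}|lborel. k z * h z) \<le> (LINT z:{0..}|lborel. k z * M)"
    using kh kM hb kpos by (intro set_integral_mono) (auto intro!: mult_left_mono dest: abs_le_D1)
  moreover have "(LINT z:{0..}|lborel. k z * (- M)) \<le> (LINT z:{0..}|lborel. k z * h z)"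
  proof (intro set_integral_mono[OF kmM kh])
    fix z :: real assume "z \<in> {0..}"
    then have "- M \<le> h z" using hb[of z] by auto
    then show "k z * (- M) \<le> k z * h z" using kpos by (intro mult_left_mono) auto
  qed
  ultimately show "\<bar>LINT z:{0..}|lborel. k z * h z\<bar> \<le> M"
    using k1 set_integral_uminus[OF kM] by simp
qed

lemma mvt_bound:
  fixes G G' :: "real \<Rightarrow> real"
  assumes der: "\<And>s. (G has_real_derivative G' s) (at s)"
    and uc: "\<And>s. \<bar>s - t\<bar> < d \<Longrightarrow> \<bar>G' s - G' t\<bar> \<le> e"
    and hh: "hh \<noteq> 0" "\<bar>hh\<bar> < d"
  shows "\<bar>(G (t + hh) - G t) / hh - G' t\<bar> \<le> e"
proof (cases "hh > 0")
  case True
  obtain \<xi> where \<xi>: "t < \<xi>" "\<xi> < t + hh" "G (t + hh) - G t = (t + hh - t) * G' \<xi>"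
    using MVT2[of t "t + hh" G G'] True der by auto
  then have "(G (t + hh) - G t) / hh = G' \<xi>" using hh by simp
  moreover have "\<bar>\<xi> - t\<bar> < d" using \<xi> hh True by auto
  ultimately show ?thesis using uc by simp
next
  case False
  then have neg: "hh < 0" using hh by simp
  obtain \<xi> where \<xi>: "t + hh < \<xi>" "\<xi> < t" "G t - G (t + hh) = (t - (t + hh)) * G' \<xi>"
    using MVT2[of "t + hh" t G G'] neg der by auto
  then have "(G (t + hh) - G t) / hh = G' \<xi>" using hh by (simp add: field_simps)
  moreover have "\<bar>\<xi> - t\<bar> < d" using \<xi> hh neg by auto
  ultimately show ?thesis using uc by simp
qed

lemma chi_kernel:
  fixes N :: "'a::euclidean_space \<Rightarrow> 'a \<Rightarrow> real" and g :: "real \<times> 'a \<Rightarrow> real"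
  assumes Nc: "\<And>v. continuous_on UNIV (\<lambda>x. N x v)"
    and Nb1: "\<And>x v. b \<le> lcw \<beta> v * N x v" and Nb2: "\<And>x v. lcw \<beta> v * N x v \<le> A" and b: "0 < b"
  obtains k where "set_integrable lborel {0..} k" "(LINT z:{0..}|lborel. k z) = 1"
    "\<And>z. 0 \<le> k z" "\<And>z. 0 \<le> z \<Longrightarrow> k z \<le> A * exp (- b * z)"
    "\<And>g t. chi N \<beta> g \<epsilon> t x v = (LINT z:{0..}|lborel. k z * g (t, x + (\<epsilon> * lcw \<beta> v * z) *\<^sub>R v))"
proof -
  define q where "q s = lcw \<beta> v * N (x + (\<epsilon> * lcw \<beta> v * s) *\<^sub>R v) v" for s
  have qc: "continuous_on UNIV q"
    unfolding q_def by (intro continuous_intros continuous_on_compose2[OF Nc[of v]]) auto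
  have ql: "\<And>s. b \<le> q s" "\<And>s. q s \<le> A" unfolding q_def using Nb1 Nb2 by auto
  define k where "k = (\<lambda>z. q z * exp (- (LINT s:{0..z}|lborel. q s)))"
  note K = kernel[OF qc ql b]
  show ?thesis
  proof (rule that[of k])
    show "chi N \<beta> g \<epsilon> t x v = (LINT z:{0..}|lborel. k z * g (t, x + (\<epsilon> * lcw \<beta> v * z) *\<^sub>R v))" for g t
      unfolding chi_def Let_def k_def q_def by simp
  next
    show "set_integrable lborel {0..} k" unfolding k_def by (rule K(3))
  next
    show "(LINT z:{0..}|lborel. k z) = 1" unfolding k_def by (rule K(4))
  next
    show "0 \<le> k z" for z unfolding k_def by (rule K(1))
  next
    show "k z \<le> A * exp (- b * z)" if "0 \<le> z" for z unfolding k_def by (rule K(2)[OF that])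
  qed
qed

lemma chi_pw:
  fixes N :: "'a::euclidean_space \<Rightarrow> 'a \<Rightarrow> real" and g :: "real \<times> 'a \<Rightarrow> real"
  assumes Nc: "\<And>v. continuous_on UNIV (\<lambda>x. N x v)"
    and Nb1: "\<And>x v. b \<le> lcw \<beta> v * N x v" and Nb2: "\<And>x v. lcw \<beta> v * N x v \<le> A" and b: "0 < b"
    and gc: "continuous_on UNIV g" and gb: "\<And>p. \<bar>g p\<bar> \<le> M"
  shows "ennreal ((chi N \<beta> g \<epsilon> t x v)^2) \<le> ennreal A *
      (\<integral>\<^sup>+z. ennreal (indicator {0..} z * (exp (- b * z) * (g (t, x + (\<epsilon> * lcw \<beta> v * z) *\<^sub>R v))^2)) \<partial>lborel)"
    and "ennreal ((chi N \<beta> g \<epsilon> t x v - g (t, x))^2) \<le> ennreal A *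
      (\<integral>\<^sup>+z. ennreal (indicator {0..} z * (exp (- b * z) * (g (t, x + (\<epsilon> * lcw \<beta> v * z) *\<^sub>R v) - g (t, x))^2)) \<partial>lborel)"
proof -
  obtain k where K: "set_integrable lborel {0..} k" "(LINT z:{0..}|lborel. k z) = 1"
    "\<And>z. 0 \<le> k z" "\<And>z. 0 \<le> z \<Longrightarrow> k z \<le> A * exp (- b * z)"
    "\<And>g t. chi N \<beta> g \<epsilon> t x v = (LINT z:{0..}|lborel. k z * g (t, x + (\<epsilon> * lcw \<beta> v * z) *\<^sub>R v))"
    by (rule chi_kernel[OF Nc Nb1 Nb2 b, of \<epsilon> x v]) blast
  have A0: "0 \<le> A" using Nb1[of x v] Nb2[of x v] b by linarith
  define h where "h z = g (t, x + (\<epsilon> * lcw \<beta> v * z) *\<^sub>R v)" for z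
  have hc: "continuous_on UNIV h"
    unfolding h_def by (intro continuous_intros continuous_on_compose2[OF gc]) auto
  have hm: "h \<in> borel_measurable borel" by (rule borel_measurable_continuous_onI[OF hc])
  have hm2: "(\<lambda>z. h z - g (t, x)) \<in> borel_measurable borel" using hm by measurable
  have hb: "\<bar>h z\<bar> \<le> M" for z unfolding h_def by (rule gb)
  have hb2: "\<bar>h z - g (t, x)\<bar> \<le> 2 * M" for z using gb[of "(t, x)"] hb[of z] by linarith
  show "ennreal ((chi N \<beta> g \<epsilon> t x v)^2) \<le> ennreal A *
      (\<integral>\<^sup>+z. ennreal (indicator {0..} z * (exp (- b * z) * (g (t, x + (\<epsilon> * lcw \<beta> v * z) *\<^sub>R v))^2)) \<partial>lborel)"
    using jensen(1)[OF K(1-4) A0 hm hb] unfolding K(5) h_def .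
  have "chi N \<beta> g \<epsilon> t x v - g (t, x) = (LINT z:{0..}|lborel. k z * (h z - g (t, x)))"
    using jensen(2)[OF K(1-4) A0 hm hb, of "g (t, x)"] K(5)[of g t] by (simp add: h_def)
  then show "ennreal ((chi N \<beta> g \<epsilon> t x v - g (t, x))^2) \<le> ennreal A *
      (\<integral>\<^sup>+z. ennreal (indicator {0..} z * (exp (- b * z) * (g (t, x + (\<epsilon> * lcw \<beta> v * z) *\<^sub>R v) - g (t, x))^2)) \<partial>lborel)"
    using jensen(1)[OF K(1-4) A0 hm2 hb2] unfolding h_def by simp
qed

lemma chi_deriv:
  fixes N :: "'a::euclidean_space \<Rightarrow> 'a \<Rightarrow> real" and g gd :: "real \<times> 'a \<Rightarrow> real"
  assumes Nc: "\<And>v. continuous_on UNIV (\<lambda>x. N x v)"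
    and Nb1: "\<And>x v. b \<le> lcw \<beta> v * N x v" and Nb2: "\<And>x v. lcw \<beta> v * N x v \<le> A" and b: "0 < b"
    and gc: "continuous_on UNIV g" and gb: "\<And>p. \<bar>g p\<bar> \<le> M"
    and gdc: "continuous_on UNIV gd" and gdb: "\<And>p. \<bar>gd p\<bar> \<le> M"
    and gd: "\<And>s y. ((\<lambda>s. g (s, y)) has_real_derivative gd (s, y)) (at s)"
    and gdu: "\<And>e. e > 0 \<Longrightarrow> \<exists>d>0. \<forall>s s' y. \<bar>s - s'\<bar> < d \<longrightarrow> \<bar>gd (s, y) - gd (s', y)\<bar> \<le> e"
  shows "((\<lambda>s. chi N \<beta> g \<epsilon> s x v) has_real_derivative chi N \<beta> gd \<epsilon> t x v) (at t)"
proof -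
  obtain k where K: "set_integrable lborel {0..} k" "(LINT z:{0..}|lborel. k z) = 1"
    "\<And>z. 0 \<le> k z" "\<And>z. 0 \<le> z \<Longrightarrow> k z \<le> A * exp (- b * z)"
    "\<And>g t. chi N \<beta> g \<epsilon> t x v = (LINT z:{0..}|lborel. k z * g (t, x + (\<epsilon> * lcw \<beta> v * z) *\<^sub>R v))"
    by (rule chi_kernel[OF Nc Nb1 Nb2 b, of \<epsilon> x v]) blast
  define y where "y z = x + (\<epsilon> * lcw \<beta> v * z) *\<^sub>R v" for z
  have yc: "continuous_on UNIV y" unfolding y_def by (intro continuous_intros)
  have meas: "(\<lambda>z. G (s, y z)) \<in> borel_measurable borel" if "continuous_on UNIV G" for G :: "real \<times> 'a \<Rightarrow> real" and s
    by (intro borel_measurable_continuous_onI continuous_on_compose2[OF that] continuous_intros yc) auto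
  have C: "chi N \<beta> G \<epsilon> s x v = (LINT z:{0..}|lborel. k z * G (s, y z))" for G s
    unfolding K(5) y_def ..
  have ig: "set_integrable lborel {0..} (\<lambda>z. k z * g (s, y z))" for s
    by (rule kbnd(1)[OF K(1-3) meas[OF gc] gb])
  have igd: "set_integrable lborel {0..} (\<lambda>z. k z * gd (s, y z))" for s
    by (rule kbnd(1)[OF K(1-3) meas[OF gdc] gdb])
  show ?thesis
    unfolding DERIV_def
  proof (rule LIM_I)
    fix r :: real assume r: "0 < r"
    obtain d where d: "d > 0" "\<And>s s' y. \<bar>s - s'\<bar> < d \<Longrightarrow> \<bar>gd (s, y) - gd (s', y)\<bar> \<le> r / 2"
      using gdu[of "r/2"] r by auto
    show "\<exists>s>0. \<forall>hh. hh \<noteq> 0 \<and> norm (hh - 0) < s \<longrightarrow>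
        norm ((chi N \<beta> g \<epsilon> (t + hh) x v - chi N \<beta> g \<epsilon> t x v) / hh - chi N \<beta> gd \<epsilon> t x v) < r"
    proof (intro exI[of _ d] conjI allI impI)
      fix hh :: real assume hh: "hh \<noteq> 0 \<and> norm (hh - 0) < d"
      define F where "F z = (g (t + hh, y z) - g (t, y z)) / hh - gd (t, y z)" for z
      have Fm: "F \<in> borel_measurable borel"
        unfolding F_def using meas[OF gc, of "t + hh"] meas[OF gc, of t] meas[OF gdc, of t] by measurable
      have Fb: "\<bar>F z\<bar> \<le> r / 2" for z
        unfolding F_def
        by (rule mvt_bound[where G="\<lambda>s. g (s, y z)" and G'="\<lambda>s. gd (s, y z)" and d=d])
           (use gd d hh in auto)
      have iF: "set_integrable lborel {0..} (\<lambda>z. k z * F z)"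
        and bF: "\<bar>LINT z:{0..}|lborel. k z * F z\<bar> \<le> r / 2"
        using kbnd[OF K(1-3) Fm, of "r/2"] Fb by auto
      have pw: "k z * g (t + hh, y z) = k z * g (t, y z) + (hh * (k z * gd (t, y z)) + hh * (k z * F z))" for z
        unfolding F_def using hh by (simp add: field_simps)
      have "chi N \<beta> g \<epsilon> (t + hh) x v = (LINT z:{0..}|lborel. k z * g (t, y z) + (hh * (k z * gd (t, y z)) + hh * (k z * F z)))"
        unfolding C pw ..
      also have "\<dots> = chi N \<beta> g \<epsilon> t x v + hh * chi N \<beta> gd \<epsilon> t x v + hh * (LINT z:{0..}|lborel. k z * F z)"
        using ig[of t] igd[of t] iF unfolding C
        by (subst set_integral_add(2)) (auto simp: set_integral_add)
      finally have "(chi N \<beta> g \<epsilon> (t + hh) x v - chi N \<beta> g \<epsilon> t x v) / hh - chi N \<beta> gd \<epsilon> t x v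
          = (LINT z:{0..}|lborel. k z * F z)"
        using hh by (simp add: field_simps)
      then show "norm ((chi N \<beta> g \<epsilon> (t + hh) x v - chi N \<beta> g \<epsilon> t x v) / hh - chi N \<beta> gd \<epsilon> t x v) < r"
        using bF r by simp
    qed (use d in auto)
  qed
qed

lemma lcw_meas[measurable]: "lcw \<beta> \<in> borel_measurable borel"
  unfolding lcw_def[abs_def] by measurable

lemma lborel3: "(lborel :: (real \<times> 'a::euclidean_space \<times> 'a) measure) = lborel \<Otimes>\<^sub>M (lborel \<Otimes>\<^sub>M lborel)"
  by (simp add: lborel_prod)

lemma lborel2: "(lborel :: (real \<times> 'a::euclidean_space) measure) = lborel \<Otimes>\<^sub>M lborel"
  by (simp add: lborel_prod)

lemma tonelli:
  fixes F :: "'a::euclidean_space \<Rightarrow> real" and E :: "real \<times> 'a \<times> 'a \<Rightarrow> real" and W :: "'a \<Rightarrow> 'a"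
  assumes Fm[measurable]: "F \<in> borel_measurable borel" and Em[measurable]: "E \<in> borel_measurable (borel \<Otimes>\<^sub>M borel \<Otimes>\<^sub>M borel)"
    and Wm[measurable]: "W \<in> borel_measurable borel" and E0: "\<And>p. 0 \<le> E p" and F0: "\<And>v. 0 \<le> F v"
  shows "(\<integral>\<^sup>+p. indicator {0<..} (fst p) * (ennreal (F (snd (snd p))) *
      (\<integral>\<^sup>+z. ennreal (indicator {0..} z * (exp (- b * z) * E (fst p, fst (snd p), z *\<^sub>R W (snd (snd p))))) \<partial>lborel))
      \<partial>(lborel :: (real \<times> 'a \<times> 'a) measure))
   = (\<integral>\<^sup>+v. ennreal (F v) * (\<integral>\<^sup>+z. ennreal (indicator {0..} z * exp (- b * z)) *
        (\<integral>\<^sup>+x. \<integral>\<^sup>+t. indicator {0<..} t * ennreal (E (t, x, z *\<^sub>R W v)) \<partial>lborel \<partial>lborel) \<partial>lborel) \<partial>lborel)"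
    (is "?L = ?R")
proof -
  interpret P: pair_sigma_finite "lborel :: real measure" "lborel \<Otimes>\<^sub>M lborel :: ('a \<times> 'a) measure"
    unfolding pair_sigma_finite_def by (simp add: lborel_prod lborel.sigma_finite_measure_axioms)
  define G where "G = (\<lambda>(t::real) (x::'a) (v::'a) (z::real). ennreal (indicator {0..} z * exp (- b * z)) * (indicator {0<..} t * ennreal (E (t, x, z *\<^sub>R W v))))"
  have inner: "indicator {0<..} t * (ennreal (F v) *
      (\<integral>\<^sup>+z. ennreal (indicator {0..} z * (exp (- b * z) * E (t, x, z *\<^sub>R W v))) \<partial>lborel))
      = ennreal (F v) * (\<integral>\<^sup>+z. G t x v z \<partial>lborel)" for t x v
  proof -
    have "(\<integral>\<^sup>+z. G t x v z \<partial>lborel) = indicator {0<..} t * (\<integral>\<^sup>+z. ennreal (indicator {0..} z * (exp (- b * z) * E (t, x, z *\<^sub>R W v))) \<partial>lborel)"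
      unfolding G_def
      by (subst nn_integral_cmult[symmetric]) (auto simp: E0 ennreal_mult[symmetric] mult_ac intro!: nn_integral_cong)
    then show ?thesis by (simp add: mult_ac)
  qed
  have "?L = (\<integral>\<^sup>+q. \<integral>\<^sup>+t. indicator {0<..} t * (ennreal (F (snd q)) *
      (\<integral>\<^sup>+z. ennreal (indicator {0..} z * (exp (- b * z) * E (t, fst q, z *\<^sub>R W (snd q)))) \<partial>lborel)) \<partial>lborel \<partial>(lborel \<Otimes>\<^sub>M lborel))"
    unfolding lborel3 by (subst P.nn_integral_snd[symmetric]) simp_all
  also have "\<dots> = (\<integral>\<^sup>+v. \<integral>\<^sup>+x. \<integral>\<^sup>+t. indicator {0<..} t * (ennreal (F v) *
      (\<integral>\<^sup>+z. ennreal (indicator {0..} z * (exp (- b * z) * E (t, x, z *\<^sub>R W v))) \<partial>lborel)) \<partial>lborel \<partial>lborel \<partial>lborel)"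
    by (subst lborel_pair.nn_integral_snd[symmetric]) simp_all
  also have "\<dots> = (\<integral>\<^sup>+v. ennreal (F v) * (\<integral>\<^sup>+x. \<integral>\<^sup>+t. \<integral>\<^sup>+z. G t x v z \<partial>lborel \<partial>lborel \<partial>lborel) \<partial>lborel)"
    unfolding inner
  proof (intro nn_integral_cong)
    fix v :: 'a
    have "(\<integral>\<^sup>+x. \<integral>\<^sup>+t. ennreal (F v) * (\<integral>\<^sup>+z. G t x v z \<partial>lborel) \<partial>lborel \<partial>lborel)
        = (\<integral>\<^sup>+x. ennreal (F v) * (\<integral>\<^sup>+t. \<integral>\<^sup>+z. G t x v z \<partial>lborel \<partial>lborel) \<partial>lborel)"
      by (intro nn_integral_cong nn_integral_cmult) (unfold G_def, measurable)
    also have "\<dots> = ennreal (F v) * (\<integral>\<^sup>+x. \<integral>\<^sup>+t. \<integral>\<^sup>+z. G t x v z \<partial>lborel \<partial>lborel \<partial>lborel)"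
      by (intro nn_integral_cmult) (unfold G_def, measurable)
    finally show "(\<integral>\<^sup>+x. \<integral>\<^sup>+t. ennreal (F v) * (\<integral>\<^sup>+z. G t x v z \<partial>lborel) \<partial>lborel \<partial>lborel)
        = ennreal (F v) * (\<integral>\<^sup>+x. \<integral>\<^sup>+t. \<integral>\<^sup>+z. G t x v z \<partial>lborel \<partial>lborel \<partial>lborel)" .
  qed
  also have "\<dots> = (\<integral>\<^sup>+v. ennreal (F v) * (\<integral>\<^sup>+z. \<integral>\<^sup>+x. \<integral>\<^sup>+t. G t x v z \<partial>lborel \<partial>lborel \<partial>lborel) \<partial>lborel)"
  proof (intro nn_integral_cong arg_cong2[where f="(*)"] refl)
    fix v :: 'a
    have "(\<integral>\<^sup>+x. \<integral>\<^sup>+t. \<integral>\<^sup>+z. G t x v z \<partial>lborel \<partial>lborel \<partial>lborel) = (\<integral>\<^sup>+x. \<integral>\<^sup>+z. \<integral>\<^sup>+t. G t x v z \<partial>lborel \<partial>lborel \<partial>lborel)"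
      by (intro nn_integral_cong lborel_pair.Fubini') (unfold G_def, measurable)
    also have "\<dots> = (\<integral>\<^sup>+z. \<integral>\<^sup>+x. \<integral>\<^sup>+t. G t x v z \<partial>lborel \<partial>lborel \<partial>lborel)"
      by (intro lborel_pair.Fubini') (unfold G_def, measurable)
    finally show "(\<integral>\<^sup>+x. \<integral>\<^sup>+t. \<integral>\<^sup>+z. G t x v z \<partial>lborel \<partial>lborel \<partial>lborel) = (\<integral>\<^sup>+z. \<integral>\<^sup>+x. \<integral>\<^sup>+t. G t x v z \<partial>lborel \<partial>lborel \<partial>lborel)" .
  qed
  also have "\<dots> = ?R"
  proof (intro nn_integral_cong arg_cong2[where f="(*)"] refl)
    fix v :: 'a and z :: real
    have "(\<integral>\<^sup>+x. \<integral>\<^sup>+t. G t x v z \<partial>lborel \<partial>lborel)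
      = (\<integral>\<^sup>+x. ennreal (indicator {0..} z * exp (- b * z)) * (\<integral>\<^sup>+t. indicator {0<..} t * ennreal (E (t, x, z *\<^sub>R W v)) \<partial>lborel) \<partial>lborel)"
      unfolding G_def by (intro nn_integral_cong nn_integral_cmult) measurable
    also have "\<dots> = ennreal (indicator {0..} z * exp (- b * z)) * (\<integral>\<^sup>+x. \<integral>\<^sup>+t. indicator {0<..} t * ennreal (E (t, x, z *\<^sub>R W v)) \<partial>lborel \<partial>lborel)"
      by (intro nn_integral_cmult) measurable
    finally show "(\<integral>\<^sup>+x. \<integral>\<^sup>+t. G t x v z \<partial>lborel \<partial>lborel)
      = ennreal (indicator {0..} z * exp (- b * z)) * (\<integral>\<^sup>+x. \<integral>\<^sup>+t. indicator {0<..} t * ennreal (E (t, x, z *\<^sub>R W v)) \<partial>lborel \<partial>lborel)" .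
  qed
  finally show ?thesis .
qed

lemma nn_translate:
  fixes u :: "'a::euclidean_space \<Rightarrow> ennreal"
  assumes [measurable]: "u \<in> borel_measurable borel"
  shows "(\<integral>\<^sup>+x. u (x + y) \<partial>lborel) = (\<integral>\<^sup>+x. u x \<partial>lborel)"
proof -
  have "(\<integral>\<^sup>+x. u x \<partial>lborel) = (\<integral>\<^sup>+x. u x \<partial>(distr lborel borel ((+) y)))"
    by (simp add: lborel_distr_plus)
  also have "\<dots> = (\<integral>\<^sup>+x. u (y + x) \<partial>lborel)"
    by (subst nn_integral_distr) auto
  finally show ?thesis by (simp add: add.commute)
qed

lemma L2_iter:
  fixes g :: "real \<times> 'a::euclidean_space \<Rightarrow> real"
  assumes [measurable]: "g \<in> borel_measurable (borel \<Otimes>\<^sub>M borel)"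
  shows "L2_sq (\<lambda>t x. g (t, x)) = (\<integral>\<^sup>+x. \<integral>\<^sup>+t. indicator {0<..} t * ennreal ((g (t, x))^2) \<partial>lborel \<partial>lborel)"
  unfolding L2_sq_def lborel2
  by (subst lborel_pair.nn_integral_snd[symmetric]) simp_all

lemma unif_cont:
  fixes g :: "'b::euclidean_space \<Rightarrow> real"
  assumes gc: "continuous_on UNIV g" and gR: "\<And>p. R < norm p \<Longrightarrow> g p = 0"
  shows "\<And>e. 0 < e \<Longrightarrow> \<exists>d>0. \<forall>p q. dist p q < d \<longrightarrow> \<bar>g p - g q\<bar> \<le> e"
proof -
  fix e :: real assume e: "0 < e"
  have "uniformly_continuous_on (cball 0 (\<bar>R\<bar> + 1)) g"
    by (intro compact_uniformly_continuous continuous_on_subset[OF gc]) auto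
  then obtain d0 where d0: "d0 > 0" "\<And>p q. p \<in> cball 0 (\<bar>R\<bar> + 1) \<Longrightarrow> q \<in> cball 0 (\<bar>R\<bar> + 1) \<Longrightarrow> dist p q < d0 \<Longrightarrow> dist (g p) (g q) < e"
    unfolding uniformly_continuous_on_def using e by metis
  show "\<exists>d>0. \<forall>p q. dist p q < d \<longrightarrow> \<bar>g p - g q\<bar> \<le> e"
  proof (intro exI[of _ "min d0 1"] conjI allI impI)
    fix p q :: 'b assume pq: "dist p q < min d0 1"
    show "\<bar>g p - g q\<bar> \<le> e"
    proof (cases "norm p \<le> \<bar>R\<bar> \<or> norm q \<le> \<bar>R\<bar>")
      case True
      have "norm p \<le> norm q + dist p q" "norm q \<le> norm p + dist p q"
        using norm_triangle_ineq2[of p q] norm_triangle_ineq2[of q p] by (auto simp: dist_norm dist_commute norm_minus_commute)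
      then have "p \<in> cball 0 (\<bar>R\<bar> + 1)" "q \<in> cball 0 (\<bar>R\<bar> + 1)"
        using True pq by auto
      then show ?thesis using d0(2)[of p q] pq by (simp add: dist_real_def)
    next
      case False
      then show ?thesis using gR[of p] gR[of q] e by auto
    qed
  qed (use d0 in auto)
qed

lemma g_bounded:
  fixes g :: "'b::euclidean_space \<Rightarrow> real"
  assumes gc: "continuous_on UNIV g" and gR: "\<And>p. R < norm p \<Longrightarrow> g p = 0"
  obtains M where "\<And>p. \<bar>g p\<bar> \<le> M"
proof -
  have "compact (g ` cball 0 \<bar>R\<bar>)"
    by (intro compact_continuous_image continuous_on_subset[OF gc]) auto
  then obtain M where M: "\<And>y. y \<in> g ` cball 0 \<bar>R\<bar> \<Longrightarrow> norm y \<le> M"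
    using compact_imp_bounded bounded_iff by metis
  show ?thesis
  proof (rule that[of "\<bar>M\<bar>"])
    fix p :: 'b
    show "\<bar>g p\<bar> \<le> \<bar>M\<bar>"
    proof (cases "norm p \<le> \<bar>R\<bar>")
      case True then show ?thesis using M[of "g p"] by auto
    next
      case False then show ?thesis using gR[of p] by auto
    qed
  qed
qed

lemma L2_fin:
  fixes g :: "real \<times> 'a::euclidean_space \<Rightarrow> real"
  assumes gc: "continuous_on UNIV g" and gR: "\<And>p. R < norm p \<Longrightarrow> g p = 0" and gb: "\<And>p. \<bar>g p\<bar> \<le> M"
  shows "L2_sq (\<lambda>t x. g (t, x)) < \<infinity>"
proof -
  have "L2_sq (\<lambda>t x. g (t, x)) \<le> (\<integral>\<^sup>+p. ennreal (M^2) * indicator (cball (0::real \<times> 'a) \<bar>R\<bar>) p \<partial>lborel)"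
    unfolding L2_sq_def
  proof (intro nn_integral_mono)
    fix p :: "real \<times> 'a"
    show "indicator {0<..} (fst p) * ennreal ((g (fst p, snd p))\<^sup>2) \<le> ennreal (M^2) * indicator (cball 0 \<bar>R\<bar>) p"
    proof (cases "norm p \<le> \<bar>R\<bar>")
      case True
      have "(g p)^2 \<le> M^2" using power_mono[OF gb[of p] abs_ge_zero, of 2] by simp
      then show ?thesis using True by (auto simp: indicator_def ennreal_leI)
    next
      case False then show ?thesis using gR[of p] by (auto simp: indicator_def)
    qed
  qed
  also have "\<dots> = ennreal (M^2) * emeasure lborel (cball (0 :: real \<times> 'a) \<bar>R\<bar>)"
    by (subst nn_integral_cmult_indicator) auto
  also have "\<dots> < \<infinity>"
    using emeasure_bounded_finite[of "cball (0 :: real \<times> 'a) \<bar>R\<bar>"] by (simp add: ennreal_mult_less_top)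
  finally show ?thesis .
qed

lemma L2_bound:
  fixes N :: "'a::euclidean_space \<Rightarrow> 'a \<Rightarrow> real" and g :: "real \<times> 'a \<Rightarrow> real" and F :: "'a \<Rightarrow> real"
  assumes Nc: "\<And>v. continuous_on UNIV (\<lambda>x. N x v)"
    and Nb1: "\<And>x v. b \<le> lcw \<beta> v * N x v" and Nb2: "\<And>x v. lcw \<beta> v * N x v \<le> A" and b: "0 < b"
    and gc: "continuous_on UNIV g" and gb: "\<And>p. \<bar>g p\<bar> \<le> M"
    and Fm[measurable]: "F \<in> borel_measurable borel" and F0: "\<And>v. 0 \<le> F v"
    and F1: "(\<integral>\<^sup>+v. ennreal (F v) \<partial>lborel) = 1"
  shows "L2F_sq F (chi N \<beta> g \<epsilon>) \<le> ennreal (A / b) * L2_sq (\<lambda>t x. g (t, x))"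
proof -
  have A0: "0 \<le> A" using Nb1[of 0 0] Nb2[of 0 0] b by linarith
  have gm[measurable]: "g \<in> borel_measurable (borel \<Otimes>\<^sub>M borel)"
    using borel_measurable_continuous_onI[OF gc] by (simp add: borel_prod)
  define W where "W v = (\<epsilon> * lcw \<beta> v) *\<^sub>R v" for v :: 'a
  have Wm[measurable]: "W \<in> borel_measurable borel" unfolding W_def[abs_def] by measurable
  define E where "E = (\<lambda>(t::real, x::'a, y::'a). A * (g (t, x + y))^2)"
  have Em[measurable]: "E \<in> borel_measurable (borel \<Otimes>\<^sub>M borel \<Otimes>\<^sub>M borel)" unfolding E_def by measurable
  have E0: "\<And>p. 0 \<le> E p" using A0 unfolding E_def by auto
  have pw: "indicator {0<..} t * ennreal (F v * (chi N \<beta> g \<epsilon> t x v)^2)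
      \<le> indicator {0<..} t * (ennreal (F v) * (\<integral>\<^sup>+z. ennreal (indicator {0..} z * (exp (- b * z) * E (t, x, z *\<^sub>R W v))) \<partial>lborel))"
    for t x v
  proof -
    have m: "(\<lambda>z. ennreal (indicator {0..} z * (exp (- b * z) * (g (t, x + (\<epsilon> * lcw \<beta> v * z) *\<^sub>R v))^2))) \<in> borel_measurable lborel"
      by measurable
    have "ennreal ((chi N \<beta> g \<epsilon> t x v)^2) \<le> ennreal A * (\<integral>\<^sup>+z. ennreal (indicator {0..} z * (exp (- b * z) * (g (t, x + (\<epsilon> * lcw \<beta> v * z) *\<^sub>R v))^2)) \<partial>lborel)"
      by (rule chi_pw(1)[OF Nc Nb1 Nb2 b gc gb])
    also have "\<dots> = (\<integral>\<^sup>+z. ennreal (indicator {0..} z * (exp (- b * z) * E (t, x, z *\<^sub>R W v))) \<partial>lborel)"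
      unfolding nn_integral_cmult[OF m, symmetric]
      by (intro nn_integral_cong) (auto simp: E_def W_def A0 ennreal_mult[symmetric] mult_ac)
    finally show ?thesis using F0[of v]
      by (cases "0 < t") (auto simp: ennreal_mult intro!: mult_left_mono)
  qed
  have inner: "(\<integral>\<^sup>+x. \<integral>\<^sup>+t. indicator {0<..} t * ennreal (E (t, x, y)) \<partial>lborel \<partial>lborel) = ennreal A * L2_sq (\<lambda>t x. g (t, x))" for y
  proof -
    define u where "u x = (\<integral>\<^sup>+t. indicator {0<..} t * ennreal (A * (g (t, x))^2) \<partial>lborel)" for x
    have um: "u \<in> borel_measurable borel" unfolding u_def[abs_def] by measurable
    have "(\<integral>\<^sup>+x. \<integral>\<^sup>+t. indicator {0<..} t * ennreal (E (t, x, y)) \<partial>lborel \<partial>lborel) = (\<integral>\<^sup>+x. u (x + y) \<partial>lborel)"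
      by (simp add: E_def u_def)
    also have "\<dots> = (\<integral>\<^sup>+x. u x \<partial>lborel)" by (rule nn_translate[OF um])
    also have "\<dots> = (\<integral>\<^sup>+x. ennreal A * (\<integral>\<^sup>+t. indicator {0<..} t * ennreal ((g (t, x))^2) \<partial>lborel) \<partial>lborel)"
      unfolding u_def
      by (intro nn_integral_cong, subst nn_integral_cmult[symmetric])
         (measurable, auto simp: A0 ennreal_mult mult_ac intro!: nn_integral_cong)
    also have "\<dots> = ennreal A * L2_sq (\<lambda>t x. g (t, x))"
      unfolding L2_iter[OF gm] by (rule nn_integral_cmult) measurable
    finally show ?thesis .
  qed
  have "L2F_sq F (chi N \<beta> g \<epsilon>) \<le> (\<integral>\<^sup>+p. indicator {0<..} (fst p) * (ennreal (F (snd (snd p))) *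
      (\<integral>\<^sup>+z. ennreal (indicator {0..} z * (exp (- b * z) * E (fst p, fst (snd p), z *\<^sub>R W (snd (snd p))))) \<partial>lborel))
      \<partial>(lborel :: (real \<times> 'a \<times> 'a) measure))"
    unfolding L2F_sq_def by (intro nn_integral_mono pw)
  also have "\<dots> = (\<integral>\<^sup>+v. ennreal (F v) * (\<integral>\<^sup>+z. ennreal (indicator {0..} z * exp (- b * z)) *
        (\<integral>\<^sup>+x. \<integral>\<^sup>+t. indicator {0<..} t * ennreal (E (t, x, z *\<^sub>R W v)) \<partial>lborel \<partial>lborel) \<partial>lborel) \<partial>lborel)"
    by (rule tonelli[OF Fm Em Wm E0 F0])
  also have "\<dots> = (\<integral>\<^sup>+v. ennreal (F v) * (\<integral>\<^sup>+z. ennreal (indicator {0..} z * exp (- b * z)) \<partial>lborel) *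
        (ennreal A * L2_sq (\<lambda>t x. g (t, x))) \<partial>lborel)"
    unfolding inner by (intro nn_integral_cong, subst nn_integral_multc) (measurable, simp add: mult_ac)
  also have "\<dots> = ennreal (1 / b) * (ennreal A * L2_sq (\<lambda>t x. g (t, x)))"
    by (subst nn_integral_multc, measurable, subst nn_integral_multc) (measurable, simp add: F1 exp_nn(1)[OF b, simplified])
  also have "\<dots> = ennreal (A / b) * L2_sq (\<lambda>t x. g (t, x))"
    using A0 b by (subst mult.assoc[symmetric], subst ennreal_mult[symmetric]) auto
  finally show ?thesis .
qed

lemma iter2:
  fixes h :: "real \<times> 'a::euclidean_space \<Rightarrow> ennreal"
  assumes [measurable]: "h \<in> borel_measurable (borel \<Otimes>\<^sub>M borel)"
  shows "(\<integral>\<^sup>+x. \<integral>\<^sup>+t. h (t, x) \<partial>lborel \<partial>lborel) = (\<integral>\<^sup>+p. h p \<partial>(lborel :: (real \<times> 'a) measure))"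
  unfolding lborel2 by (subst lborel_pair.nn_integral_snd[symmetric]) simp_all

lemma HN_small:
  fixes g :: "real \<times> 'a::euclidean_space \<Rightarrow> real"
  assumes gc: "continuous_on UNIV g" and gR: "\<And>p. R < norm p \<Longrightarrow> g p = 0" and A0: "0 \<le> A"
    and a: "0 < a"
  shows "\<exists>d>0. \<forall>y::'a. norm y < d \<longrightarrow>
    (\<integral>\<^sup>+x. \<integral>\<^sup>+t. indicator {0<..} t * ennreal (A * (g (t, x + y) - g (t, x))^2) \<partial>lborel \<partial>lborel) < a"
proof -
  have gm[measurable]: "g \<in> borel_measurable (borel \<Otimes>\<^sub>M borel)"
    using borel_measurable_continuous_onI[OF gc] by (simp add: borel_prod)
  define C where "C = cball (0 :: real \<times> 'a) (\<bar>R\<bar> + 1)"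
  have Cb: "C \<in> sets borel" unfolding C_def by (intro borel_closed closed_cball)
  have Cm[measurable]: "C \<in> sets (borel \<Otimes>\<^sub>M borel)" using Cb by (simp only: borel_prod)
  define mC where "mC = measure lborel C"
  have mC0: "0 \<le> mC" unfolding mC_def by simp
  have emC: "emeasure lborel C = ennreal mC"
    unfolding mC_def C_def using emeasure_bounded_finite[of "cball (0 :: real \<times> 'a) (\<bar>R\<bar> + 1)"]
    by (intro emeasure_eq_ennreal_measure) auto
  obtain r where r: "0 < r" "ennreal r < a"
  proof (cases "a = \<infinity>")
    case True then show ?thesis using that[of 1] by simp
  next
    case False
    then obtain r0 where "a = ennreal r0" "0 < r0" using a by (cases a) auto
    then show ?thesis using that[of "r0 / 2"] by (auto simp: ennreal_lessI)
  qed
  define e where "e = sqrt (r / (2 * (A * mC + 1)))"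
  have AmC: "0 \<le> A * mC" using A0 mC0 by simp
  have e0: "0 < e" unfolding e_def using r AmC by (auto intro!: divide_pos_pos)
  have e2: "A * e^2 * mC < r"
  proof -
    have "A * e^2 * mC = (A * mC) * (r / (2 * (A * mC + 1)))"
      unfolding e_def using r AmC by (simp add: mult_ac)
    also have "\<dots> < r"
    proof -
      have h: "0 \<le> A * (mC * r)" using A0 mC0 r by simp
      show ?thesis using r AmC h by (simp add: field_simps)
    qed
    finally show ?thesis .
  qed
  obtain d where d: "d > 0" "\<And>p q. dist p q < d \<Longrightarrow> \<bar>g p - g q\<bar> \<le> e"
    using unif_cont[OF gc gR e0] by blast
  show ?thesis
  proof (intro exI[of _ "min d 1"] conjI allI impI)
    fix y :: 'a assume y: "norm y < min d 1"
    have pw: "indicator {0<..} t * ennreal (A * (g (t, x + y) - g (t, x))^2) \<le> ennreal (A * e^2) * indicator C (t, x)"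
      for t x
    proof (cases "(t, x) \<in> C")
      case True
      have "dist (t, x + y) (t, x) = norm y" by (simp add: dist_Pair_Pair dist_norm)
      then have "\<bar>g (t, x + y) - g (t, x)\<bar> \<le> e" using d(2) y by auto
      then have "(g (t, x + y) - g (t, x))^2 \<le> e^2" using power_mono[of _ e 2] by (metis abs_ge_zero power2_abs)
      then have "A * (g (t, x + y) - g (t, x))^2 \<le> A * e^2" using A0 by (intro mult_left_mono)
      then show ?thesis using True by (auto simp: indicator_def intro!: ennreal_leI)
    next
      case False
      have n: "\<bar>R\<bar> + 1 < norm (t, x)" using False unfolding C_def mem_cball_0 by simp
      have "norm (t, x) \<le> norm (t, x + y) + norm y"
        using norm_triangle_ineq[of "(t, x + y)" "(0, - y)"] by (simp add: norm_Pair)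
      then have "R < norm (t, x + y)" using n y by auto
      moreover have "R < norm (t, x)" using n by auto
      ultimately show ?thesis using gR by simp
    qed
    have "(\<integral>\<^sup>+x. \<integral>\<^sup>+t. indicator {0<..} t * ennreal (A * (g (t, x + y) - g (t, x))^2) \<partial>lborel \<partial>lborel)
        \<le> (\<integral>\<^sup>+x. \<integral>\<^sup>+t. ennreal (A * e^2) * indicator C (t, x) \<partial>lborel \<partial>lborel)"
      by (intro nn_integral_mono pw)
    also have "\<dots> = (\<integral>\<^sup>+p. ennreal (A * e^2) * indicator C p \<partial>lborel)"
      by (rule iter2) measurable
    also have "\<dots> = ennreal (A * e^2) * ennreal mC"
      using Cb by (subst nn_integral_cmult_indicator) (auto simp: emC)
    also have "\<dots> = ennreal (A * e^2 * mC)" using A0 mC0 by (simp add: ennreal_mult)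
    also have "\<dots> < ennreal r" using e2 r by (auto intro!: ennreal_lessI)
    also have "\<dots> < a" by (rule r)
    finally show "(\<integral>\<^sup>+x. \<integral>\<^sup>+t. indicator {0<..} t * ennreal (A * (g (t, x + y) - g (t, x))^2) \<partial>lborel \<partial>lborel) < a" .
  qed (use d in auto)
qed

lemma HN_bound:
  fixes g :: "real \<times> 'a::euclidean_space \<Rightarrow> real"
  assumes gm[measurable]: "g \<in> borel_measurable (borel \<Otimes>\<^sub>M borel)" and A0: "0 \<le> A"
  shows "(\<integral>\<^sup>+x. \<integral>\<^sup>+t. indicator {0<..} t * ennreal (A * (g (t, x + y) - g (t, x))^2) \<partial>lborel \<partial>lborel)
     \<le> 2 * (ennreal (2 * A) * L2_sq (\<lambda>t x. g (t, x)))"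
proof -
  define u where "u x = (\<integral>\<^sup>+t. indicator {0<..} t * ennreal (2 * A * (g (t, x))^2) \<partial>lborel)" for x
  have um[measurable]: "u \<in> borel_measurable borel" unfolding u_def[abs_def] by measurable
  have pw: "indicator {0<..} t * ennreal (A * (g (t, x + y) - g (t, x))^2)
      \<le> indicator {0<..} t * ennreal (2 * A * (g (t, x + y))^2) + indicator {0<..} t * ennreal (2 * A * (g (t, x))^2)" for t x
  proof -
    have "(g (t, x + y) - g (t, x))^2 \<le> 2 * (g (t, x + y))^2 + 2 * (g (t, x))^2"
    proof -
      have "2 * (g (t, x + y))^2 + 2 * (g (t, x))^2 - (g (t, x + y) - g (t, x))^2 = (g (t, x + y) + g (t, x))^2"
        by (simp add: power2_eq_square algebra_simps)
      then show ?thesis using zero_le_power2[of "g (t, x + y) + g (t, x)"] by linarith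
    qed
    then have "A * (g (t, x + y) - g (t, x))^2 \<le> A * (2 * (g (t, x + y))^2 + 2 * (g (t, x))^2)"
      using A0 by (rule mult_left_mono)
    then have "A * (g (t, x + y) - g (t, x))^2 \<le> 2 * A * (g (t, x + y))^2 + 2 * A * (g (t, x))^2"
      by (simp add: algebra_simps)
    then have "ennreal (A * (g (t, x + y) - g (t, x))^2) \<le> ennreal (2 * A * (g (t, x + y))^2) + ennreal (2 * A * (g (t, x))^2)"
      using A0 by (simp add: ennreal_plus[symmetric] del: ennreal_plus)
    then show ?thesis by (cases "0 < t") auto
  qed
  have "(\<integral>\<^sup>+x. \<integral>\<^sup>+t. indicator {0<..} t * ennreal (A * (g (t, x + y) - g (t, x))^2) \<partial>lborel \<partial>lborel)
      \<le> (\<integral>\<^sup>+x. \<integral>\<^sup>+t. indicator {0<..} t * ennreal (2 * A * (g (t, x + y))^2) + indicator {0<..} t * ennreal (2 * A * (g (t, x))^2) \<partial>lborel \<partial>lborel)"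
    by (intro nn_integral_mono pw)
  also have "\<dots> = (\<integral>\<^sup>+x. u (x + y) + u x \<partial>lborel)"
    unfolding u_def by (intro nn_integral_cong nn_integral_add) measurable
  also have "\<dots> = (\<integral>\<^sup>+x. u (x + y) \<partial>lborel) + (\<integral>\<^sup>+x. u x \<partial>lborel)"
    by (intro nn_integral_add) measurable
  also have "\<dots> = 2 * (\<integral>\<^sup>+x. u x \<partial>lborel)"
    unfolding nn_translate[OF um] by (simp add: mult_2)
  also have "(\<integral>\<^sup>+x. u x \<partial>lborel) = ennreal (2 * A) * L2_sq (\<lambda>t x. g (t, x))"
    unfolding L2_iter[OF gm] u_def
    by (subst nn_integral_cmult[symmetric], measurable,
        intro nn_integral_cong, subst nn_integral_cmult[symmetric])
       (measurable, auto simp: A0 ennreal_mult[symmetric] mult_ac intro!: nn_integral_cong)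
  finally show ?thesis .
qed

lemma chi_conv:
  fixes N :: "'a::euclidean_space \<Rightarrow> 'a \<Rightarrow> real" and g :: "real \<times> 'a \<Rightarrow> real" and F :: "'a \<Rightarrow> real"
  assumes Nc: "\<And>v. continuous_on UNIV (\<lambda>x. N x v)"
    and Nb1: "\<And>x v. b \<le> lcw \<beta> v * N x v" and Nb2: "\<And>x v. lcw \<beta> v * N x v \<le> A" and b: "0 < b"
    and gc: "continuous_on UNIV g" and gb: "\<And>p. \<bar>g p\<bar> \<le> M" and gR: "\<And>p. R < norm p \<Longrightarrow> g p = 0"
    and Fm[measurable]: "F \<in> borel_measurable borel" and F0: "\<And>v. 0 \<le> F v"
    and F1: "(\<integral>\<^sup>+v. ennreal (F v) \<partial>lborel) = 1"
  shows "((\<lambda>\<epsilon>. L2F_sq F (\<lambda>t x v. chi N \<beta> g \<epsilon> t x v - g (t, x))) \<longlongrightarrow> 0) (at_right 0)"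
proof -
  have A0: "0 \<le> A" using Nb1[of 0 0] Nb2[of 0 0] b by linarith
  have gm[measurable]: "g \<in> borel_measurable (borel \<Otimes>\<^sub>M borel)"
    using borel_measurable_continuous_onI[OF gc] by (simp add: borel_prod)
  define V where "V v = lcw \<beta> v *\<^sub>R v" for v :: 'a
  have Vm[measurable]: "V \<in> borel_measurable borel" unfolding V_def[abs_def] by measurable
  define HN where "HN y = (\<integral>\<^sup>+x. \<integral>\<^sup>+t. indicator {0<..} t * ennreal (A * (g (t, x + y) - g (t, x))^2) \<partial>lborel \<partial>lborel)"
    for y :: 'a
  have HNm[measurable]: "HN \<in> borel_measurable borel" unfolding HN_def[abs_def] by measurable
  define B where "B = 2 * (ennreal (2 * A) * L2_sq (\<lambda>t x. g (t, x)))"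
  have HNb: "HN y \<le> B" for y unfolding HN_def B_def by (rule HN_bound[OF gm A0])
  have Bfin: "B < \<infinity>"
    unfolding B_def using L2_fin[OF gc gR gb] by (simp add: ennreal_mult_less_top)
  define J where "J \<epsilon> = (\<integral>\<^sup>+v. ennreal (F v) * (\<integral>\<^sup>+z. ennreal (indicator {0..} z * exp (- b * z)) *
        HN ((\<epsilon> * z) *\<^sub>R V v) \<partial>lborel) \<partial>lborel)" for \<epsilon> :: real
  have step1: "L2F_sq F (\<lambda>t x v. chi N \<beta> g \<epsilon> t x v - g (t, x)) \<le> J \<epsilon>" for \<epsilon>
  proof -
    define W where "W v = (\<epsilon> * lcw \<beta> v) *\<^sub>R v" for v :: 'a
    have Wm[measurable]: "W \<in> borel_measurable borel" unfolding W_def[abs_def] by measurable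
    define E where "E = (\<lambda>(t::real, x::'a, y::'a). A * (g (t, x + y) - g (t, x))^2)"
    have Em[measurable]: "E \<in> borel_measurable (borel \<Otimes>\<^sub>M borel \<Otimes>\<^sub>M borel)" unfolding E_def by measurable
    have E0: "\<And>p. 0 \<le> E p" using A0 unfolding E_def by auto
    have pw: "indicator {0<..} t * ennreal (F v * (chi N \<beta> g \<epsilon> t x v - g (t, x))^2)
        \<le> indicator {0<..} t * (ennreal (F v) * (\<integral>\<^sup>+z. ennreal (indicator {0..} z * (exp (- b * z) * E (t, x, z *\<^sub>R W v))) \<partial>lborel))"
      for t x v
    proof -
      have m: "(\<lambda>z. ennreal (indicator {0..} z * (exp (- b * z) * (g (t, x + (\<epsilon> * lcw \<beta> v * z) *\<^sub>R v) - g (t, x))^2))) \<in> borel_measurable lborel"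
        by measurable
      have "ennreal ((chi N \<beta> g \<epsilon> t x v - g (t, x))^2) \<le> ennreal A * (\<integral>\<^sup>+z. ennreal (indicator {0..} z * (exp (- b * z) * (g (t, x + (\<epsilon> * lcw \<beta> v * z) *\<^sub>R v) - g (t, x))^2)) \<partial>lborel)"
        by (rule chi_pw(2)[OF Nc Nb1 Nb2 b gc gb])
      also have "\<dots> = (\<integral>\<^sup>+z. ennreal (indicator {0..} z * (exp (- b * z) * E (t, x, z *\<^sub>R W v))) \<partial>lborel)"
        unfolding nn_integral_cmult[OF m, symmetric]
        by (intro nn_integral_cong) (auto simp: E_def W_def A0 ennreal_mult[symmetric] mult_ac)
      finally show ?thesis using F0[of v]
        by (cases "0 < t") (auto simp: ennreal_mult intro!: mult_left_mono)
    qed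
    have inner: "(\<integral>\<^sup>+x. \<integral>\<^sup>+t. indicator {0<..} t * ennreal (E (t, x, z *\<^sub>R W v)) \<partial>lborel \<partial>lborel) = HN ((\<epsilon> * z) *\<^sub>R V v)"
      for z v unfolding HN_def E_def W_def V_def by (simp add: mult_ac)
    have "L2F_sq F (\<lambda>t x v. chi N \<beta> g \<epsilon> t x v - g (t, x)) \<le> (\<integral>\<^sup>+p. indicator {0<..} (fst p) * (ennreal (F (snd (snd p))) *
        (\<integral>\<^sup>+z. ennreal (indicator {0..} z * (exp (- b * z) * E (fst p, fst (snd p), z *\<^sub>R W (snd (snd p))))) \<partial>lborel))
        \<partial>(lborel :: (real \<times> 'a \<times> 'a) measure))"
      unfolding L2F_sq_def by (intro nn_integral_mono pw)
    also have "\<dots> = J \<epsilon>"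
      unfolding tonelli[OF Fm Em Wm E0 F0] inner J_def ..
    finally show ?thesis .
  qed
  have ez: "(\<integral>\<^sup>+z. ennreal (indicator {0..} z * exp (- b * z)) * B \<partial>lborel) = ennreal (1 / b) * B"
    by (subst nn_integral_multc) (measurable, simp add: exp_nn(1)[OF b, simplified])
  have ezfin: "ennreal (1 / b) * B < \<infinity>" using Bfin by (simp add: ennreal_mult_less_top)
  have HN0: "(\<lambda>n. HN (Y n)) \<longlonglongrightarrow> 0" if Y: "Y \<longlonglongrightarrow> 0" for Y :: "nat \<Rightarrow> 'a"
  proof (rule order_tendstoI)
    fix a :: ennreal assume "a < 0" then show "\<forall>\<^sub>F n in sequentially. a < HN (Y n)" by simp
  next
    fix a :: ennreal assume a: "0 < a"
    obtain d where d: "d > 0" "\<And>y. norm y < d \<Longrightarrow> HN y < a"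
      using HN_small[OF gc gR A0 a] unfolding HN_def by blast
    have "(\<lambda>n. norm (Y n)) \<longlonglongrightarrow> 0" using tendsto_norm_zero[OF Y] .
    then have "\<forall>\<^sub>F n in sequentially. norm (Y n) < d" using d(1) by (rule order_tendstoD)
    then show "\<forall>\<^sub>F n in sequentially. HN (Y n) < a" by eventually_elim (rule d(2))
  qed
  have Jlim: "(J \<longlongrightarrow> 0) (at_right 0)"
  proof (rule tendsto_at_right_sequentially[of 0 1])
    fix S :: "nat \<Rightarrow> real" assume S: "\<And>n. 0 < S n" "S \<longlonglongrightarrow> 0"
    have Iz: "(\<lambda>n. \<integral>\<^sup>+z. ennreal (indicator {0..} z * exp (- b * z)) * HN ((S n * z) *\<^sub>R V v) \<partial>lborel) \<longlonglongrightarrow> (\<integral>\<^sup>+(z::real). 0 \<partial>lborel)"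
      for v
    proof (rule nn_integral_dominated_convergence[where w="\<lambda>z. ennreal (indicator {0..} z * exp (- b * z)) * B"
        and u="\<lambda>i z. ennreal (indicator {0..} z * exp (- b * z)) * HN ((S i * z) *\<^sub>R V v)" and u'="\<lambda>z. 0"])
      show "\<And>i. (\<lambda>z. ennreal (indicator {0..} z * exp (- b * z)) * HN ((S i * z) *\<^sub>R V v)) \<in> borel_measurable lborel"
        by measurable
      show "(\<lambda>z. 0) \<in> borel_measurable lborel" by simp
      show "(\<lambda>z. ennreal (indicator {0..} z * exp (- b * z)) * B) \<in> borel_measurable lborel" by measurable
      show "AE z in lborel. ennreal (indicator {0..} z * exp (- b * z)) * HN ((S j * z) *\<^sub>R V v) \<le> ennreal (indicator {0..} z * exp (- b * z)) * B" for j
        using HNb by (intro AE_I2 mult_left_mono) auto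
      show "(\<integral>\<^sup>+z. ennreal (indicator {0..} z * exp (- b * z)) * B \<partial>lborel) < \<infinity>" using ez ezfin by simp
      show "AE z in lborel. (\<lambda>i. ennreal (indicator {0..} z * exp (- b * z)) * HN ((S i * z) *\<^sub>R V v)) \<longlonglongrightarrow> 0"
      proof (intro AE_I2)
        fix z :: real
        have "(\<lambda>n. (S n * z) *\<^sub>R V v) \<longlonglongrightarrow> (0 * z) *\<^sub>R V v"
          by (intro tendsto_intros S(2))
        then have "(\<lambda>n. HN ((S n * z) *\<^sub>R V v)) \<longlonglongrightarrow> 0" using HN0 by simp
        then show "(\<lambda>i. ennreal (indicator {0..} z * exp (- b * z)) * HN ((S i * z) *\<^sub>R V v)) \<longlonglongrightarrow> 0"
          using ennreal_tendsto_cmult[of "ennreal (indicator {0..} z * exp (- b * z))"] by fastforce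
      qed
    qed
    have "(\<lambda>n. J (S n)) \<longlonglongrightarrow> (\<integral>\<^sup>+(v::'a). 0 \<partial>lborel)"
      unfolding J_def
    proof (rule nn_integral_dominated_convergence[where w="\<lambda>v. ennreal (F v) * (ennreal (1 / b) * B)"
        and u="\<lambda>i v. ennreal (F v) * (\<integral>\<^sup>+z. ennreal (indicator {0..} z * exp (- b * z)) * HN ((S i * z) *\<^sub>R V v) \<partial>lborel)"
        and u'="\<lambda>v. 0"])
      show "\<And>i. (\<lambda>v. ennreal (F v) * (\<integral>\<^sup>+z. ennreal (indicator {0..} z * exp (- b * z)) * HN ((S i * z) *\<^sub>R V v) \<partial>lborel)) \<in> borel_measurable lborel"
        by measurable
      show "(\<lambda>v. 0) \<in> borel_measurable lborel" by simp
      show "(\<lambda>v. ennreal (F v) * (ennreal (1 / b) * B)) \<in> borel_measurable lborel" by measurable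
      show "AE v in lborel. ennreal (F v) * (\<integral>\<^sup>+z. ennreal (indicator {0..} z * exp (- b * z)) * HN ((S j * z) *\<^sub>R V v) \<partial>lborel) \<le> ennreal (F v) * (ennreal (1 / b) * B)" for j
      proof (intro AE_I2 mult_left_mono)
        fix v :: 'a
        have "(\<integral>\<^sup>+z. ennreal (indicator {0..} z * exp (- b * z)) * HN ((S j * z) *\<^sub>R V v) \<partial>lborel) \<le> (\<integral>\<^sup>+z. ennreal (indicator {0..} z * exp (- b * z)) * B \<partial>lborel)"
          using HNb by (intro nn_integral_mono mult_left_mono) auto
        then show "(\<integral>\<^sup>+z. ennreal (indicator {0..} z * exp (- b * z)) * HN ((S j * z) *\<^sub>R V v) \<partial>lborel) \<le> ennreal (1 / b) * B"
          using ez by simp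
      qed simp
      show "(\<integral>\<^sup>+v. ennreal (F v) * (ennreal (1 / b) * B) \<partial>lborel) < \<infinity>"
        using ezfin by (subst nn_integral_multc) (measurable, simp add: F1)
      show "AE v in lborel. (\<lambda>i. ennreal (F v) * (\<integral>\<^sup>+z. ennreal (indicator {0..} z * exp (- b * z)) * HN ((S i * z) *\<^sub>R V v) \<partial>lborel)) \<longlonglongrightarrow> 0"
      proof (intro AE_I2)
        fix v :: 'a
        show "(\<lambda>i. ennreal (F v) * (\<integral>\<^sup>+z. ennreal (indicator {0..} z * exp (- b * z)) * HN ((S i * z) *\<^sub>R V v) \<partial>lborel)) \<longlonglongrightarrow> 0"
          using ennreal_tendsto_cmult[OF _ Iz[of v], of "ennreal (F v)"] by simp
      qed
    qed
    then show "(\<lambda>n. J (S n)) \<longlonglongrightarrow> 0" by simp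
  qed simp
  show ?thesis
    by (rule tendsto_sandwich[OF _ _ tendsto_const Jlim]) (auto intro!: always_eventually step1)
qed

lemma test_props:
  fixes \<phi> :: "real \<times> 'a::euclidean_space \<Rightarrow> real"
  assumes tf: "test_fun \<phi>"
  shows "continuous_on UNIV \<phi>"
    and "continuous_on UNIV (\<lambda>p. frechet_derivative \<phi> (at p) (1, 0))"
    and "\<And>s y. ((\<lambda>s. \<phi> (s, y)) has_real_derivative frechet_derivative \<phi> (at (s, y)) (1, 0)) (at s)"
    and "\<exists>R. \<forall>p. R < norm p \<longrightarrow> \<phi> p = 0 \<and> frechet_derivative \<phi> (at p) (1, 0) = 0"
proof -
  define \<psi> where "\<psi> p = frechet_derivative \<phi> (at p) (1, 0)" for p
  have C1: "Ck 1 \<phi>" using tf unfolding test_fun_def smooth_fun_def by blast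
  have C1': "(\<forall>x. \<phi> differentiable (at x)) \<and> (\<forall>b\<in>Basis. Ck 0 (\<lambda>x. frechet_derivative \<phi> (at x) b))"
    using C1 unfolding One_nat_def Ck.simps(2) by blast
  then have diff: "\<And>p. \<phi> differentiable (at p)" by blast
  have cd: "\<And>b. b \<in> Basis \<Longrightarrow> continuous_on UNIV (\<lambda>p. frechet_derivative \<phi> (at p) b)"
    using C1' by (simp only: Ck.simps(1))
  have basis: "(1::real, 0::'a) \<in> Basis" by (simp add: Basis_prod_def)
  show "continuous_on UNIV \<phi>"
    using diff by (intro continuous_at_imp_continuous_on ballI differentiable_imp_continuous_within) auto
  show "continuous_on UNIV (\<lambda>p. frechet_derivative \<phi> (at p) (1, 0))" by (rule cd[OF basis])
  have der: "((\<lambda>s. \<phi> (s, y)) has_real_derivative \<psi> (s, y)) (at s)" for s y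
  proof -
    define D where "D = frechet_derivative \<phi> (at (s, y))"
    have hD: "(\<phi> has_derivative D) (at (s, y))" unfolding D_def using diff frechet_derivative_works by blast
    have lin: "linear D" using has_derivative_bounded_linear[OF hD] bounded_linear.linear by blast
    have hp: "((\<lambda>s. (s, y)) has_derivative (\<lambda>h. (h, 0))) (at s)"
      by (auto intro!: derivative_eq_intros)
    have "((\<phi> \<circ> (\<lambda>s. (s, y))) has_derivative (D \<circ> (\<lambda>h. (h, 0)))) (at s)"
      by (rule diff_chain_at[OF hp hD])
    moreover have "(D \<circ> (\<lambda>h. (h, 0))) = (\<lambda>h. \<psi> (s, y) * h)"
    proof
      fix h :: real
      have "D (h, 0) = D (h *\<^sub>R (1, 0))" by simp
      also have "\<dots> = h *\<^sub>R D (1, 0)" by (rule linear_cmul[OF lin])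
      finally show "(D \<circ> (\<lambda>h. (h, 0))) h = \<psi> (s, y) * h" by (simp add: \<psi>_def D_def)
    qed
    ultimately show ?thesis by (simp add: has_field_derivative_def comp_def)
  qed
  then show "\<And>s y. ((\<lambda>s. \<phi> (s, y)) has_real_derivative frechet_derivative \<phi> (at (s, y)) (1, 0)) (at s)"
    by (simp add: \<psi>_def)
  define K where "K = closure {p. \<phi> p \<noteq> 0}"
  have "compact K" using tf unfolding test_fun_def K_def by blast
  then obtain R where R: "\<And>p. p \<in> K \<Longrightarrow> norm p \<le> R"
    using compact_imp_bounded bounded_pos by metis
  show "\<exists>R. \<forall>p. R < norm p \<longrightarrow> \<phi> p = 0 \<and> frechet_derivative \<phi> (at p) (1, 0) = 0"
  proof (intro exI[of _ R] allI impI conjI)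
    fix p :: "real \<times> 'a" assume p: "R < norm p"
    have pK: "p \<notin> K"
    proof
      assume "p \<in> K"
      then have "norm p \<le> R" by (rule R)
      with p show False by simp
    qed
    then show "\<phi> p = 0" unfolding K_def using closure_subset[of "{p. \<phi> p \<noteq> 0}"] by blast
    obtain s y where sy: "p = (s, y)" by (cases p)
    define T where "T = (\<lambda>s. (s, y)) -` (- K)"
    have oK: "open (- K)" unfolding K_def by (simp add: open_Compl)
    have T: "open T" unfolding T_def
      by (rule continuous_open_vimage[OF oK]) (intro continuous_intros)
    have sT: "s \<in> T" using pK sy unfolding T_def by simp
    have "((\<lambda>s. 0) has_real_derivative \<psi> (s, y)) (at s)"
    proof (rule has_field_derivative_transform_within_open[OF der T sT])
      fix s' assume "s' \<in> T"
      then have "(s', y) \<notin> K" unfolding T_def by simp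
      then show "\<phi> (s', y) = 0" unfolding K_def using closure_subset[of "{p. \<phi> p \<noteq> 0}"] by blast
    qed
    then have "\<psi> (s, y) = 0" using DERIV_unique DERIV_const by blast
    then show "frechet_derivative \<phi> (at p) (1, 0) = 0" using sy by (simp add: \<psi>_def)
  qed
qed

theorem lemma2p3:
  fixes \<sigma> :: "'a::euclidean_space \<Rightarrow> 'a \<Rightarrow> 'a \<Rightarrow> real"
    and F :: "'a \<Rightarrow> real"
    and \<nu>0 :: "'a \<Rightarrow> real"
    and \<beta> \<nu>1 \<nu>2 :: real
    and \<phi> :: "real \<times> 'a \<Rightarrow> real"
  assumes sigma_nonneg: "\<And>x v v'. \<sigma> x v v' \<ge> 0"
    and sigma_meas: "(\<lambda>(x, v, v'). \<sigma> x v v') \<in> borel_measurable (lborel :: ('a \<times> 'a \<times> 'a) measure)"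
    \<comment> \<open>(A2)\<close>
    and F_L1nu: "\<And>x. integrable lborel (\<lambda>v. F v * nu \<sigma> x v)"
    and F_eq: "\<And>x v. Qop \<sigma> F x v = 0"
    and F_pos: "\<And>v. F v > 0"
    and F_mass: "(\<integral>v. F v \<partial>lborel) = 1"
    \<comment> \<open>(B2)\<close>
    and nu12: "\<nu>1 > 0" "\<nu>2 > 0"
    and nu_bounds: "\<And>x v. \<nu>1 * jbr v powr \<beta> \<le> nu \<sigma> x v \<and> nu \<sigma> x v \<le> \<nu>2 * jbr v powr \<beta>"
    and nu_limit: "\<forall>e>0. \<exists>R. \<forall>x v. norm v \<ge> R \<longrightarrow> \<bar>norm v powr (- \<beta>) * nu \<sigma> x v - \<nu>0 x\<bar> < e"
    and nu_C1: "\<And>v. Ck 1 (\<lambda>x. nu \<sigma> x v)"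
    and nu_deriv: "\<exists>C. AE p in (lborel :: ('a \<times> 'a) measure).
          \<forall>b\<in>Basis. jbr (snd p) powr (- \<beta>) *
             \<bar>frechet_derivative (\<lambda>y. nu \<sigma> y (snd p)) (at (fst p)) b\<bar> \<le> C"
    \<comment> \<open>test function\<close>
    and phi_test: "test_fun \<phi>"
  shows "((\<lambda>\<epsilon>. L2F_sq F (\<lambda>t x v. chi (nu \<sigma>) \<beta> \<phi> \<epsilon> t x v - \<phi> (t, x)))
            \<longlongrightarrow> 0) (at_right 0) \<and>
         ((\<lambda>\<epsilon>. L2F_sq F (\<lambda>t x v. deriv (\<lambda>s. chi (nu \<sigma>) \<beta> \<phi> \<epsilon> s x v) t
                                   - deriv (\<lambda>s. \<phi> (s, x)) t))
            \<longlongrightarrow> 0) (at_right 0) \<and>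
         (\<exists>C>0. \<forall>\<epsilon>>0.
           L2F_sq F (chi (nu \<sigma>) \<beta> \<phi> \<epsilon>) \<le> (ennreal C)^2 * L2_sq (\<lambda>t x. \<phi> (t, x)) \<and>
           L2F_sq F (\<lambda>t x v. deriv (\<lambda>s. chi (nu \<sigma>) \<beta> \<phi> \<epsilon> s x v) t)
             \<le> (ennreal C)^2 * L2_sq (\<lambda>t x. deriv (\<lambda>s. \<phi> (s, x)) t))"
proof -
  define \<psi> where "\<psi> = (\<lambda>p. frechet_derivative \<phi> (at p) (1::real, 0::'a))"
  note TP = test_props[OF phi_test]
  have phic: "continuous_on UNIV \<phi>" by (rule TP(1))
  have psic: "continuous_on UNIV \<psi>" unfolding \<psi>_def by (rule TP(2))
  have phid: "\<And>s y. ((\<lambda>s. \<phi> (s, y)) has_real_derivative \<psi> (s, y)) (at s)"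
    unfolding \<psi>_def by (rule TP(3))
  obtain R where R: "\<And>p. R < norm p \<Longrightarrow> \<phi> p = 0 \<and> \<psi> p = 0"
    using TP(4) unfolding \<psi>_def by blast
  have phiR: "\<And>p. R < norm p \<Longrightarrow> \<phi> p = 0" using R by blast
  have psiR: "\<And>p. R < norm p \<Longrightarrow> \<psi> p = 0" using R by blast
  obtain M1 where M1: "\<And>p. \<bar>\<phi> p\<bar> \<le> M1" using g_bounded[OF phic phiR] by blast
  obtain M2 where M2: "\<And>p. \<bar>\<psi> p\<bar> \<le> M2" using g_bounded[OF psic psiR] by blast
  define M where "M = max M1 M2"
  have phiM: "\<And>p. \<bar>\<phi> p\<bar> \<le> M" unfolding M_def using M1 by (meson max.coboundedI1)
  have psiM: "\<And>p. \<bar>\<psi> p\<bar> \<le> M" unfolding M_def using M2 by (meson max.coboundedI2)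
  have psiu: "\<And>e. e > 0 \<Longrightarrow> \<exists>d>0. \<forall>s s' y. \<bar>s - s'\<bar> < d \<longrightarrow> \<bar>\<psi> (s, y) - \<psi> (s', y)\<bar> \<le> e"
  proof -
    fix e :: real assume e: "e > 0"
    obtain d where d: "d > 0" "\<And>p q. dist p q < d \<Longrightarrow> \<bar>\<psi> p - \<psi> q\<bar> \<le> e"
      using unif_cont[OF psic psiR e] by blast
    show "\<exists>d>0. \<forall>s s' y. \<bar>s - s'\<bar> < d \<longrightarrow> \<bar>\<psi> (s, y) - \<psi> (s', y)\<bar> \<le> e"
    proof (intro exI[of _ d] conjI allI impI)
      fix s s' :: real and y :: 'a assume "\<bar>s - s'\<bar> < d"
      moreover have "dist (s, y) (s', y) = \<bar>s - s'\<bar>" by (simp add: dist_Pair_Pair dist_real_def)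
      ultimately show "\<bar>\<psi> (s, y) - \<psi> (s', y)\<bar> \<le> e" using d(2) by simp
    qed (use d in auto)
  qed
  have Nc: "\<And>v. continuous_on UNIV (\<lambda>x. nu \<sigma> x v)"
  proof -
    fix v :: 'a
    have "(\<forall>x. (\<lambda>x. nu \<sigma> x v) differentiable (at x)) \<and> (\<forall>b\<in>Basis. Ck 0 (\<lambda>x. frechet_derivative (\<lambda>x. nu \<sigma> x v) (at x) b))"
      using nu_C1[of v] unfolding One_nat_def Ck.simps(2) by blast
    then show "continuous_on UNIV (\<lambda>x. nu \<sigma> x v)"
      by (intro continuous_at_imp_continuous_on ballI differentiable_imp_continuous_within) auto
  qed
  define b0 where "b0 = \<nu>1 * 2 powr (- \<bar>\<beta>\<bar> / 2)"
  define A where "A = \<nu>2 * 2 powr (\<bar>\<beta>\<bar> / 2)"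
  have b0: "0 < b0" unfolding b0_def using nu12 by simp
  have Nb1: "\<And>x v. b0 \<le> lcw \<beta> v * nu \<sigma> x v"
  proof -
    fix x v :: 'a
    have "b0 \<le> \<nu>1 * (lcw \<beta> v * jbr v powr \<beta>)"
      unfolding b0_def using lcw_jbr(1)[of \<beta> v] nu12 by (intro mult_left_mono) auto
    also have "\<dots> = lcw \<beta> v * (\<nu>1 * jbr v powr \<beta>)" by (simp add: mult_ac)
    also have "\<dots> \<le> lcw \<beta> v * nu \<sigma> x v"
      using nu_bounds[where x=x and v=v] lcw_pos[of \<beta> v] by (intro mult_left_mono) auto
    finally show "b0 \<le> lcw \<beta> v * nu \<sigma> x v" .
  qed
  have Nb2: "\<And>x v. lcw \<beta> v * nu \<sigma> x v \<le> A"
  proof -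
    fix x v :: 'a
    have "lcw \<beta> v * nu \<sigma> x v \<le> lcw \<beta> v * (\<nu>2 * jbr v powr \<beta>)"
      using nu_bounds[where x=x and v=v] lcw_pos[of \<beta> v] by (intro mult_left_mono) auto
    also have "\<dots> = \<nu>2 * (lcw \<beta> v * jbr v powr \<beta>)" by (simp add: mult_ac)
    also have "\<dots> \<le> A"
      unfolding A_def using lcw_jbr(2)[of \<beta> v] nu12 by (intro mult_left_mono) auto
    finally show "lcw \<beta> v * nu \<sigma> x v \<le> A" .
  qed
  have Ab: "b0 \<le> A" using Nb1[of 0 0] Nb2[of 0 0] by linarith
  have Fint: "integrable lborel F"
  proof (rule ccontr)
    assume "\<not> integrable lborel F"
    then have "(\<integral>v. F v \<partial>lborel) = 0" by (rule not_integrable_integral_eq)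
    then show False using F_mass by simp
  qed
  have Fm: "F \<in> borel_measurable borel"
    using borel_measurable_integrable[OF Fint] by simp
  have F0: "\<And>v. 0 \<le> F v" using F_pos less_imp_le by blast
  have F1: "(\<integral>\<^sup>+v. ennreal (F v) \<partial>lborel) = 1"
    using nn_integral_eq_integral[OF Fint] F0 F_mass by simp
  have dchi: "deriv (\<lambda>s. chi (nu \<sigma>) \<beta> \<phi> \<epsilon> s x v) t = chi (nu \<sigma>) \<beta> \<psi> \<epsilon> t x v" for \<epsilon> t :: real and x v :: 'a
    by (rule DERIV_imp_deriv[OF chi_deriv[OF Nc Nb1 Nb2 b0 phic phiM psic psiM phid psiu]])
  have dphi: "deriv (\<lambda>s. \<phi> (s, x)) t = \<psi> (t, x)" for t :: real and x :: 'a
    by (rule DERIV_imp_deriv[OF phid])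
  have c1: "((\<lambda>\<epsilon>. L2F_sq F (\<lambda>t x v. chi (nu \<sigma>) \<beta> \<phi> \<epsilon> t x v - \<phi> (t, x))) \<longlongrightarrow> 0) (at_right 0)"
    by (rule chi_conv[OF Nc Nb1 Nb2 b0 phic phiM phiR Fm F0 F1])
  have c2: "((\<lambda>\<epsilon>. L2F_sq F (\<lambda>t x v. deriv (\<lambda>s. chi (nu \<sigma>) \<beta> \<phi> \<epsilon> s x v) t - deriv (\<lambda>s. \<phi> (s, x)) t)) \<longlongrightarrow> 0) (at_right 0)"
    unfolding dchi dphi by (rule chi_conv[OF Nc Nb1 Nb2 b0 psic psiM psiR Fm F0 F1])
  define C where "C = sqrt (A / b0)"
  have C0: "C > 0" unfolding C_def using b0 Ab by simp
  have C2: "(ennreal C)^2 = ennreal (A / b0)"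
    using C0 b0 Ab unfolding C_def by (simp add: ennreal_power)
  have c3: "\<forall>\<epsilon>>0. L2F_sq F (chi (nu \<sigma>) \<beta> \<phi> \<epsilon>) \<le> (ennreal C)^2 * L2_sq (\<lambda>t x. \<phi> (t, x)) \<and>
           L2F_sq F (\<lambda>t x v. deriv (\<lambda>s. chi (nu \<sigma>) \<beta> \<phi> \<epsilon> s x v) t)
             \<le> (ennreal C)^2 * L2_sq (\<lambda>t x. deriv (\<lambda>s. \<phi> (s, x)) t)"
  proof (intro allI impI conjI)
    fix \<epsilon> :: real
    show "L2F_sq F (chi (nu \<sigma>) \<beta> \<phi> \<epsilon>) \<le> (ennreal C)^2 * L2_sq (\<lambda>t x. \<phi> (t, x))"
      unfolding C2 by (rule L2_bound[OF Nc Nb1 Nb2 b0 phic phiM Fm F0 F1])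
    have "L2F_sq F (chi (nu \<sigma>) \<beta> \<psi> \<epsilon>) \<le> (ennreal C)^2 * L2_sq (\<lambda>t x. \<psi> (t, x))"
      unfolding C2 by (rule L2_bound[OF Nc Nb1 Nb2 b0 psic psiM Fm F0 F1])
    moreover have "(\<lambda>t x v. deriv (\<lambda>s. chi (nu \<sigma>) \<beta> \<phi> \<epsilon> s x v) t) = chi (nu \<sigma>) \<beta> \<psi> \<epsilon>"
      by (simp add: dchi)
    ultimately show "L2F_sq F (\<lambda>t x v. deriv (\<lambda>s. chi (nu \<sigma>) \<beta> \<phi> \<epsilon> s x v) t)
             \<le> (ennreal C)^2 * L2_sq (\<lambda>t x. deriv (\<lambda>s. \<phi> (s, x)) t)"
      by (simp add: dphi)
  qed
  show ?thesis using c1 c2 c3 C0 by blast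
qed

end
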